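(* Let $n>4$, let $k$ be a divisor of $n$ with $1<k\le n/2$, write $n=km$, let $G\in\{\mathrm{Sym}(n),\mathrm{Alt}(n)\}$, and let $\Omega$ be the set of partitions of $\{1,\dots,n\}$ into $m$ parts of size $k$, with the natural action of $G$. Then $G$ contains an element of prime order $p$ that is quasi-semiregular on $\Omega$ if and only if $p$ is odd, $k=p$ and $2\le m\le p$. Moreover, if $g$ is a quasi-semiregular element of prime order $p$ and $\Gamma=\{\Gamma_1,\dots,\Gamma_m\}$ is the unique $g$-invariant partition in $\Omega$, then $g\in\mathrm{Alt}(n)$, $g$ fixes each $\Gamma_i$ setwise, and either (1) $m=p$ and $g$ lies in the unique $G$-conjugacy class of elements of cycle type $1^pp^{m-1}$; or (2) $2\le m<p$ and $g$ lies in one of two $G$-conjugacy classes, namely the elements of cycle type $1^pp^{m-1}$ or those of cycle type $p^m$.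
   Context: A permutation $g$ is quasi-semiregular if $\langle g\rangle$ has a unique fixed point and acts semiregularly (only the identity fixes a point) on the remaining points. *)

theory Defs
  imports "HOL-Combinatorics.Combinatorics" "HOL-Library.Disjoint_Sets" "HOL-Library.Multiset"
    "HOL-Computational_Algebra.Primes"
begin

definition sym_grp :: "nat \<Rightarrow> (nat \<Rightarrow> nat) set" where
  "sym_grp n = {g. g permutes {1..n}}"

definition alt_grp :: "nat \<Rightarrow> (nat \<Rightarrow> nat) set" where
  "alt_grp n = {g. g permutes {1..n} \<and> evenperm g}"

definition uniform_partitions :: "nat \<Rightarrow> nat \<Rightarrow> nat \<Rightarrow> nat set set set" where
  "uniform_partitions n k m =
     {P. partition_on {1..n} P \<and> card P = m \<and> (\<forall>B\<in>P. card B = k)}"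

definition set_act :: "(nat \<Rightarrow> nat) \<Rightarrow> nat set set \<Rightarrow> nat set set" where
  "set_act g P = (\<lambda>B. g ` B) ` P"

definition quasi_semiregular :: "'b set \<Rightarrow> ('b \<Rightarrow> 'b) \<Rightarrow> bool" where
  "quasi_semiregular X f \<longleftrightarrow>
     (\<exists>!x. x \<in> X \<and> (\<forall>j. (f ^^ j) x = x)) \<and>
     (\<forall>j. \<forall>x\<in>X. (f ^^ j) x = x \<and> \<not> (\<forall>i. (f ^^ i) x = x) \<longrightarrow> (\<forall>y\<in>X. (f ^^ j) y = y))"

definition cycle_type :: "('a \<Rightarrow> 'a) \<Rightarrow> 'a set \<Rightarrow> nat multiset" where
  "cycle_type g A = image_mset card (mset_set {orbit g x | x. x \<in> A})"

end

theory Submission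
  imports Defs
begin
lemma funpow_mod_id:
  assumes "h ^^ p = id" shows "h ^^ i = h ^^ (i mod p)"
proof -
  have "h ^^ (i mod p + p * (i div p)) = h ^^ (i mod p) \<circ> (h ^^ p) ^^ (i div p)"
    by (simp only: funpow_add funpow_mult)
  then show ?thesis by (simp add: assms)
qed

lemma funpow_fix: "h x = x \<Longrightarrow> (h ^^ j) x = x"
  by (induction j) auto

lemma prime_order_fix:
  assumes "prime p" "h ^^ p = id" "(h ^^ d) x = x" "\<not> p dvd d"
  shows "h x = x"
proof -
  have d0: "d \<noteq> 0" using assms(4) by (metis dvd_0_right)
  have "coprime p d" using assms(1,4) by (simp add: prime_imp_coprime)
  then have g: "gcd d p = 1" by (simp add: coprime_commute)
  obtain a b where ab: "d * a = p * b + 1" using bezout_nat[OF d0, of p] g by auto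
  have it: "(h ^^ (d * j)) x = x" for j
  proof (induction j)
    case (Suc j)
    have "(h ^^ (d * Suc j)) x = (h ^^ d) ((h ^^ (d * j)) x)"
      by (simp add: funpow_add)
    then show ?case using Suc assms(3) by simp
  qed simp
  have p1: "1 < p" using assms(1) prime_gt_1_nat by blast
  have m: "(p * b + 1) mod p = 1" using p1 by (metis add.commute mod_less mod_mult_self2)
  have "h ^^ (d * a) = h" using funpow_mod_id[OF assms(2), of "d*a"] ab m by simp
  then show ?thesis using it[of a] by simp
qed

lemma perm_of_inj:
  assumes "finite S" "inj_on f S" "f ` S \<subseteq> S" "\<And>x. x \<notin> S \<Longrightarrow> f x = x"
  shows "f permutes S"
proof (rule bij_imp_permutes)
  show "bij_betw f S S" using endo_inj_surj[OF assms(1,3,2)] assms(2) by (simp add: bij_betw_def)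
qed (use assms in auto)

lemma perm_of_invol:
  assumes "\<And>x. f (f x) = x" "\<And>x. x \<notin> S \<Longrightarrow> f x = x"
  shows "f permutes S"
  unfolding permutes_def using assms by metis

lemma evenperm_funpow:
  assumes "permutation g" shows "evenperm (g ^^ j) = (even j \<or> evenperm g)"
proof (induction j)
  case (Suc j)
  have "permutation (g ^^ j)" using assms by (simp add: permutation_funpow)
  then have "evenperm (g ^^ Suc j) = (evenperm g = evenperm (g ^^ j))"
    using evenperm_comp[OF assms \<open>permutation (g ^^ j)\<close>] by (simp only: funpow.simps(2))
  then show ?case using Suc.IH even_Suc[of j] by blast
qed simp

locale pg =
  fixes g :: "nat \<Rightarrow> nat" and p :: nat and S :: "nat set"
  assumes perm: "g permutes S" and finS: "finite S" and pr: "prime p" and gp: "g ^^ p = id"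
begin

definition cyc where "cyc x = (\<lambda>i. (g ^^ i) x) ` {..<p}"
definition Fx where "Fx = {x \<in> S. g x = x}"
definition Cyc where "Cyc = {cyc x | x. x \<in> S \<and> g x \<noteq> x}"

lemma p1: "1 < p" using pr prime_gt_1_nat by blast
lemma p0: "0 < p" using p1 by simp

lemma gpow_mod: "(g ^^ i) x = (g ^^ (i mod p)) x"
  using funpow_mod_id[OF gp] by metis

lemma cyc_range: "cyc x = range (\<lambda>i. (g ^^ i) x)"
  unfolding cyc_def using gpow_mod p0 by (auto intro!: image_eqI[where x="_ mod p"])

lemma g_cyc: "y \<in> cyc x \<Longrightarrow> g y \<in> cyc x"
  unfolding cyc_range by (auto intro!: image_eqI[where x="Suc _"])

lemma gpow_cyc: "y \<in> cyc x \<Longrightarrow> (g ^^ j) y \<in> cyc x"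
  by (induction j) (auto simp: g_cyc)

lemma cyc_self: "x \<in> cyc x"
  unfolding cyc_range by (auto intro!: image_eqI[where x=0])

lemma cyc_sub: "y \<in> cyc x \<Longrightarrow> cyc y \<subseteq> cyc x"
proof
  fix z assume "y \<in> cyc x" "z \<in> cyc y"
  then obtain i j where "y = (g ^^ i) x" "z = (g ^^ j) y" unfolding cyc_range by auto
  then have "z = (g ^^ (j + i)) x" by (simp add: funpow_add)
  then show "z \<in> cyc x" unfolding cyc_range by auto
qed

lemma cyc_sym: "y \<in> cyc x \<Longrightarrow> x \<in> cyc y"
proof -
  assume "y \<in> cyc x"
  then obtain i where i: "i < p" "y = (g ^^ i) x" unfolding cyc_def by auto
  have "(g ^^ (p - i)) ((g ^^ i) x) = (g ^^ (p - i + i)) x" by (simp add: funpow_add)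
  then have "(g ^^ (p - i)) y = (g ^^ p) x" using i by simp
  then have "(g ^^ (p - i)) y = x" using gp by simp
  then show ?thesis unfolding cyc_range by (metis rangeI)
qed

lemma cyc_eq: "y \<in> cyc x \<Longrightarrow> cyc y = cyc x"
  using cyc_sub cyc_sym by blast

lemma cyc_disj: "z \<in> cyc x \<Longrightarrow> z \<in> cyc y \<Longrightarrow> cyc x = cyc y"
  using cyc_eq by metis

lemma inS_g: "g x \<in> S \<longleftrightarrow> x \<in> S"
  using perm by (simp add: permutes_in_image)

lemma inS_gpow: "(g ^^ j) x \<in> S \<longleftrightarrow> x \<in> S"
  by (rule permutes_in_image[OF permutes_funpow[OF perm]])

lemma cyc_S: "x \<in> S \<Longrightarrow> cyc x \<subseteq> S"
  unfolding cyc_def using inS_gpow by auto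

lemma cyc_fixed: "g x = x \<Longrightarrow> cyc x = {x}"
  unfolding cyc_def using p0 funpow_fix[of g x] by auto

lemma g_inj: "inj g" using perm permutes_inj by blast

lemma nonfixed_inj: assumes "g x \<noteq> x" shows "inj_on (\<lambda>i. (g ^^ i) x) {..<p}"
proof -
  have *: False if "i < j" "j < p" "(g ^^ i) x = (g ^^ j) x" for i j
  proof -
    have "(g ^^ (j - i)) x = x" using funpow_diff[OF g_inj, of i j x] that by simp
    moreover have "\<not> p dvd (j - i)" using that by (auto dest: dvd_imp_le)
    ultimately show False using prime_order_fix[OF pr gp] assms by blast
  qed
  show ?thesis
    by (rule inj_onI) (metis lessThan_iff linorder_neqE_nat *)
qed

lemma card_cyc: assumes "g x \<noteq> x" shows "card (cyc x) = p"
proof -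
  have "card (cyc x) = card {..<p}" unfolding cyc_def by (rule card_image[OF nonfixed_inj[OF assms]])
  then show ?thesis by simp
qed

lemma nonfixed_cyc: assumes "g x \<noteq> x" "y \<in> cyc x" shows "g y \<noteq> y"
proof
  assume "g y = y"
  then have "cyc x = {y}" using cyc_eq[OF assms(2)] cyc_fixed by simp
  then have "card (cyc x) = 1" by simp
  with card_cyc[OF assms(1)] p1 show False by simp
qed

lemma orbit_cyc: "orbit g x = cyc x"
proof
  show "orbit g x \<subseteq> cyc x" unfolding orbit_altdef cyc_range by auto
  show "cyc x \<subseteq> orbit g x"
  proof
    fix y assume "y \<in> cyc x"
    then obtain i where i: "i < p" "y = (g ^^ i) x" unfolding cyc_def by auto
    show "y \<in> orbit g x"
    proof (cases "i = 0")
      case True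
      then have "y = (g ^^ p) x" using i gp by simp
      then show ?thesis unfolding orbit_altdef using p0 by blast
    next
      case False
      then show ?thesis unfolding orbit_altdef using i by blast
    qed
  qed
qed

lemma finCyc: "finite Cyc"
proof -
  have "Cyc \<subseteq> Pow S" unfolding Cyc_def using cyc_S by auto
  then show ?thesis using finS finite_subset by blast
qed

lemma finFx: "finite Fx" unfolding Fx_def using finS by simp

lemma orbits_split: "{orbit g x | x. x \<in> S} = (\<lambda>x. {x}) ` Fx \<union> Cyc"
  unfolding orbit_cyc Fx_def Cyc_def using cyc_fixed by auto

lemma cycle_type_g: "cycle_type g S = replicate_mset (card Fx) 1 + replicate_mset (card Cyc) p"
proof -
  have cC: "\<And>C. C \<in> Cyc \<Longrightarrow> card C = p" unfolding Cyc_def using card_cyc by auto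
  have disj: "(\<lambda>x. {x}) ` Fx \<inter> Cyc = {}"
    using cC p1 by fastforce
  have e1: "cycle_type g S = image_mset card (mset_set ((\<lambda>x. {x}) ` Fx)) + image_mset card (mset_set Cyc)"
    unfolding cycle_type_def orbits_split
    using mset_set_Union[OF _ finCyc disj] finFx by simp
  have e2: "image_mset card (mset_set ((\<lambda>x. {x}) ` Fx)) = replicate_mset (card Fx) 1"
  proof -
    have "image_mset card (mset_set ((\<lambda>x. {x}) ` Fx)) = image_mset card (image_mset (\<lambda>x. {x}) (mset_set Fx))"
      by (subst image_mset_mset_set) (auto simp: inj_on_def)
    also have "\<dots> = image_mset (\<lambda>x. 1) (mset_set Fx)" by (simp add: multiset.map_comp o_def)
    also have "\<dots> = replicate_mset (card Fx) 1" by (simp add: image_mset_const_eq)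
    finally show ?thesis .
  qed
  have e3: "image_mset card (mset_set Cyc) = image_mset (\<lambda>x. p) (mset_set Cyc)"
    by (rule image_mset_cong) (simp add: finCyc cC)
  have e4: "image_mset (\<lambda>x. p) (mset_set Cyc) = replicate_mset (card Cyc) p" by (simp add: image_mset_const_eq)
  show ?thesis by (simp only: e1 e2 e3 e4)
qed

lemma Cyc_disjnt: "pairwise disjnt Cyc"
proof (rule pairwiseI)
  fix A B assume "A \<in> Cyc" "B \<in> Cyc" "A \<noteq> B"
  then obtain x y where "A = cyc x" "B = cyc y" unfolding Cyc_def by auto
  then show "disjnt A B" using \<open>A \<noteq> B\<close> cyc_disj unfolding disjnt_def by blast
qed

lemma Cyc_S: "C \<in> Cyc \<Longrightarrow> C \<subseteq> S"
  unfolding Cyc_def using cyc_S by auto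

lemma Cyc_card: "C \<in> Cyc \<Longrightarrow> card C = p"
  unfolding Cyc_def using card_cyc by auto

lemma cyc_in_Cyc: "x \<in> S \<Longrightarrow> g x \<noteq> x \<Longrightarrow> cyc x \<in> Cyc"
  unfolding Cyc_def by auto

lemma S_split: "S = Fx \<union> \<Union>Cyc"
proof
  show "S \<subseteq> Fx \<union> \<Union>Cyc"
  proof
    fix x assume x: "x \<in> S"
    show "x \<in> Fx \<union> \<Union>Cyc"
    proof (cases "g x = x")
      case True then show ?thesis using x by (simp add: Fx_def)
    next
      case False then show ?thesis using x cyc_in_Cyc cyc_self by blast
    qed
  qed
  show "Fx \<union> \<Union>Cyc \<subseteq> S" using Cyc_S unfolding Fx_def by blast
qed

lemma card_S: "card S = card Fx + p * card Cyc"
proof -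
  have "Fx \<inter> \<Union>Cyc = {}" unfolding Fx_def Cyc_def using nonfixed_cyc by blast
  then have "card S = card Fx + card (\<Union>Cyc)"
    using S_split card_Un_disjoint finS by (metis finite_Un)
  also have "card (\<Union>Cyc) = sum card Cyc"
    by (rule card_Union_disjoint[OF Cyc_disjnt]) (use finS Cyc_S in \<open>meson finite_subset\<close>)
  also have "\<dots> = sum (\<lambda>_. p) Cyc" by (rule sum.cong) (simp_all add: Cyc_card)
  finally show ?thesis by simp
qed

end

lemma set_act_comp: "set_act (f \<circ> h) P = set_act f (set_act h P)"
  unfolding set_act_def image_image by (simp add: image_comp)

lemma set_act_id: "set_act id P = P" unfolding set_act_def by simp

lemma set_act_pow: "(set_act f ^^ j) P = set_act (f ^^ j) P"
proof (induction j)
  case 0 then show ?case by (simp add: set_act_def)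
next
  case (Suc j)
  have "(set_act f ^^ Suc j) P = set_act f ((set_act f ^^ j) P)" by simp
  also have "\<dots> = set_act f (set_act (f ^^ j) P)" using Suc by simp
  also have "\<dots> = set_act (f \<circ> f ^^ j) P" by (simp add: set_act_comp)
  finally show ?case by (simp only: funpow.simps(2))
qed

lemma set_act_in:
  assumes "c permutes {1..n}" "P \<in> uniform_partitions n k m"
  shows "set_act c P \<in> uniform_partitions n k m"
proof -
  have pP: "partition_on {1..n} P" "card P = m" "\<forall>B\<in>P. card B = k"
    using assms(2) unfolding uniform_partitions_def by auto
  have inj: "inj c" using assms(1) permutes_inj by blast
  have injo: "inj_on c A" for A by (meson inj inj_on_subset subset_UNIV)
  have im: "c ` {1..n} = {1..n}" using assms(1) permutes_image by blast
  have "partition_on (c ` {1..n}) ((`) c ` P - {{}})"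
    by (rule partition_on_inj_image[OF pP(1) injo])
  moreover have "(`) c ` P - {{}} = set_act c P"
    unfolding set_act_def using partition_onD3[OF pP(1)] by auto
  ultimately have 1: "partition_on {1..n} (set_act c P)" using im by simp
  have "inj_on (\<lambda>B. c ` B) P" by (auto simp: inj_on_def inj_image_eq_iff[OF inj])
  then have 2: "card (set_act c P) = m" unfolding set_act_def using pP(2) by (simp add: card_image)
  have 3: "\<forall>B\<in>set_act c P. card B = k" unfolding set_act_def using pP(3) card_image[OF injo] by auto
  show ?thesis unfolding uniform_partitions_def using 1 2 3 by blast
qed

lemma qsr_iff:
  assumes "g permutes {1..n}" "prime p" "g ^^ p = id"
  shows "quasi_semiregular (uniform_partitions n k m) (set_act g) \<longleftrightarrow>
         (\<exists>!P. P \<in> uniform_partitions n k m \<and> set_act g P = P)"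
proof -
  let ?h = "set_act g"
  let ?X = "uniform_partitions n k m"
  have hp: "?h ^^ p = id" by (rule ext) (simp add: set_act_pow assms(3) set_act_id)
  have fixall: "(\<forall>j. (?h ^^ j) P = P) \<longleftrightarrow> ?h P = P" for P
  proof
    assume "\<forall>j. (?h ^^ j) P = P" then have "(?h ^^ 1) P = P" by blast
    then show "?h P = P" by simp
  next
    assume "?h P = P" then show "\<forall>j. (?h ^^ j) P = P" using funpow_fix by metis
  qed
  have semi: "\<forall>j. \<forall>x\<in>?X. (?h ^^ j) x = x \<and> \<not>(\<forall>i. (?h^^i) x = x) \<longrightarrow> (\<forall>y\<in>?X. (?h^^j) y = y)"
  proof (intro allI ballI impI)
    fix j x y assume a: "(?h ^^ j) x = x \<and> \<not>(\<forall>i. (?h^^i) x = x)"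
    then have "\<not> ?h x = x" using fixall by blast
    then have "p dvd j" using prime_order_fix[OF assms(2) hp] a by blast
    then have "?h ^^ j = id" using funpow_mod_id[OF hp, of j] by simp
    then show "(?h^^j) y = y" by simp
  qed
  show ?thesis
  proof
    assume "quasi_semiregular ?X ?h"
    then show "\<exists>!P. P \<in> ?X \<and> ?h P = P" unfolding quasi_semiregular_def fixall by (rule conjunct1)
  next
    assume "\<exists>!P. P \<in> ?X \<and> ?h P = P"
    then show "quasi_semiregular ?X ?h" unfolding quasi_semiregular_def fixall using semi[unfolded fixall] by (rule conjI)
  qed
qed

locale upart =
  fixes n k m :: nat and P :: "nat set set"
  assumes inP: "P \<in> uniform_partitions n k m" and k1: "1 < k"
begin

lemma part: "partition_on {1..n} P" using inP unfolding uniform_partitions_def by auto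
lemma cardP: "card P = m" using inP unfolding uniform_partitions_def by auto
lemma bcard: "B \<in> P \<Longrightarrow> card B = k" using inP unfolding uniform_partitions_def by auto
lemma bfin: assumes "B \<in> P" shows "finite B"
proof (rule ccontr)
  assume "infinite B" then have "card B = 0" by simp
  then show False using bcard[OF assms] k1 by simp
qed
lemma bsub: "B \<in> P \<Longrightarrow> B \<subseteq> {1..n}" using partition_onD1[OF part] by auto
lemma bdisj: "B1 \<in> P \<Longrightarrow> B2 \<in> P \<Longrightarrow> x \<in> B1 \<Longrightarrow> x \<in> B2 \<Longrightarrow> B1 = B2"
  using partition_onD2[OF part] unfolding pairwise_def disjnt_def by blast
lemma cover: "x \<in> {1..n} \<Longrightarrow> \<exists>B\<in>P. x \<in> B" using partition_onD1[OF part] by auto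
lemma other: assumes "B \<in> P" obtains w where "w \<in> B" "w \<noteq> x"
proof -
  have "\<not> B \<subseteq> {x}"
  proof
    assume "B \<subseteq> {x}"
    then have "card B \<le> card {x}" by (intro card_mono) simp_all
    then have "card B \<le> 1" by simp
    then show False using bcard[OF assms] k1 by simp
  qed
  then show ?thesis using that by blast
qed
lemma bne: "B \<in> P \<Longrightarrow> \<exists>x. x \<in> B" using other by metis
lemma finP: "m \<noteq> 0 \<Longrightarrow> finite P" using cardP card.infinite by force
end

lemma upartI: "P \<in> uniform_partitions n k m \<Longrightarrow> 1 < k \<Longrightarrow> upart n k m P"
  by (simp add: upart_def)

locale pgn = pg g p "{1..n}" for g p n +
  fixes k m :: nat
  assumes nkm: "n = k * m" and k1: "1 < k" and m2: "2 \<le> m"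
begin

abbreviation "Om \<equiv> uniform_partitions n k m"

lemma fixed_pow: "set_act g P = P \<Longrightarrow> set_act (g ^^ j) P = P"
  using set_act_pow[where f=g and j=j and P=P] funpow_fix[where h="set_act g" and x=P and j=j] by simp

lemma img_pow: "((\<lambda>X. g ` X) ^^ j) X = (g ^^ j) ` X"
  by (induction j) (simp_all add: image_comp)

lemma img_p: "(\<lambda>X. g ` X) ^^ p = id"
  by (rule ext) (simp add: img_pow gp)

lemma inv_pow: "g ` B = B \<Longrightarrow> (g ^^ j) ` B = B"
  using img_pow[of j B] funpow_fix[where h="\<lambda>X. g ` X" and x=B and j=j] by simp

lemma inv_cyc: "g ` B = B \<Longrightarrow> a \<in> B \<Longrightarrow> cyc a \<subseteq> B"
  unfolding cyc_def using inv_pow by blast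

lemma conj_fixed:
  assumes "c permutes {1..n}" "c \<circ> g = g \<circ> c" "P \<in> Om" "set_act g P = P"
  shows "set_act c P \<in> Om \<and> set_act g (set_act c P) = set_act c P"
proof
  show "set_act c P \<in> Om" by (rule set_act_in[OF assms(1,3)])
  have "set_act g (set_act c P) = set_act (g \<circ> c) P" by (simp add: set_act_comp)
  also have "\<dots> = set_act (c \<circ> g) P" using assms(2) by simp
  also have "\<dots> = set_act c P" using assms(4) by (simp add: set_act_comp)
  finally show "set_act g (set_act c P) = set_act c P" .
qed

lemma blk_pow:
  assumes "set_act g P = P" "B \<in> P"
  shows "(g ^^ j) ` B \<in> P"
proof -
  have "(g ^^ j) ` B \<in> set_act (g ^^ j) P" unfolding set_act_def using assms(2) by blast
  then show ?thesis using fixed_pow[OF assms(1)] by simp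
qed

lemma blk_g:
  assumes "set_act g P = P" "B \<in> P"
  shows "g ` B \<in> P"
  using blk_pow[OF assms, of 1] by simp

lemma noninv_nf:
  assumes "P \<in> Om" "set_act g P = P" "B \<in> P" "g ` B \<noteq> B" "z \<in> B"
  shows "g z \<noteq> z"
proof
  assume gz: "g z = z"
  interpret upart n k m P using upartI assms(1) k1 by blast
  have "z \<in> g ` B" using gz assms(5) by (metis image_eqI)
  then show False using bdisj[OF blk_g[OF assms(2,3)] assms(3) _ assms(5)] assms(4) by blast
qed

lemma noninv_inj:
  assumes "P \<in> Om" "set_act g P = P" "B \<in> P" "g ` B \<noteq> B" "z \<in> B" "w \<in> B" "w \<in> cyc z"
  shows "w = z"
proof (rule ccontr)
  assume wz: "w \<noteq> z"
  interpret upart n k m P using upartI assms(1) k1 by blast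
  obtain i where i: "i < p" "w = (g ^^ i) z" using assms(7) unfolding cyc_def by blast
  have i0: "i \<noteq> 0" using i wz by (metis funpow_0)
  have "w \<in> (g ^^ i) ` B" using i assms(5) by blast
  then have "(g ^^ i) ` B = B" using bdisj[OF blk_pow[OF assms(2,3)] assms(3) _ assms(6)] by blast
  then have "((\<lambda>X. g ` X) ^^ i) B = B" by (simp add: img_pow)
  moreover have "\<not> p dvd i" using i i0 by (auto dest: dvd_imp_le)
  ultimately have "g ` B = B" using prime_order_fix[OF pr img_p] by blast
  then show False using assms(4) by blast
qed

lemma g_notin_cyc: assumes "x \<notin> cyc z" shows "g x \<notin> cyc z"
proof
  assume "g x \<in> cyc z"
  then have "(g ^^ (p - 1)) (g x) \<in> cyc z" by (rule gpow_cyc)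
  moreover have "(g ^^ (p - 1)) (g x) = (g ^^ Suc (p - 1)) x" by (simp only: funpow_Suc_right o_apply)
  moreover have "Suc (p - 1) = p" using p0 by simp
  ultimately show False using assms gp by simp
qed

definition rot where "rot z x = (if x \<in> cyc z then g x else x)"

lemma rot_perm: assumes "z \<in> {1..n}" shows "rot z permutes {1..n}"
proof (rule perm_of_inj[OF finS])
  show "inj_on (rot z) {1..n}"
  proof (rule inj_onI)
    fix x y assume "rot z x = rot z y"
    then show "x = y" unfolding rot_def using g_cyc g_inj[THEN injD]
      by (cases "x \<in> cyc z"; cases "y \<in> cyc z") auto
  qed
  show "rot z ` {1..n} \<subseteq> {1..n}"
  proof
    fix y assume "y \<in> rot z ` {1..n}"
    then obtain x where x: "x \<in> {1..n}" "y = rot z x" by blast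
    show "y \<in> {1..n}"
    proof (cases "x \<in> cyc z")
      case True then have "y = g x" using x(2) unfolding rot_def by simp
      then show ?thesis using inS_g[of x] x(1) by blast
    next
      case False then have "y = x" using x(2) unfolding rot_def by simp
      then show ?thesis using x(1) by blast
    qed
  qed
  fix x assume "x \<notin> {1..n}"
  then have "x \<notin> cyc z" using cyc_S[OF assms] by blast
  then show "rot z x = x" unfolding rot_def by simp
qed

lemma rot_comm: "rot z \<circ> g = g \<circ> rot z"
proof
  fix x show "(rot z \<circ> g) x = (g \<circ> rot z) x"
    unfolding rot_def using g_cyc g_notin_cyc by (cases "x \<in> cyc z") auto
qed

lemma transp_comm:
  assumes "g x = x" "g y = y" shows "transpose x y \<circ> g = g \<circ> transpose x y"
proof
  fix z
  show "(transpose x y \<circ> g) z = (g \<circ> transpose x y) z"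
  proof (cases "z = x \<or> z = y")
    case True then show ?thesis using assms by auto
  next
    case False
    then have "g z \<noteq> x" "g z \<noteq> y" using assms g_inj[THEN injD] by metis+
    then show ?thesis using False by simp
  qed
qed

end

context pgn begin

primrec tsw :: "nat \<Rightarrow> nat \<Rightarrow> nat \<Rightarrow> nat \<Rightarrow> nat" where
  "tsw a b 0 = id"
| "tsw a b (Suc j) = transpose ((g ^^ j) a) ((g ^^ j) b) \<circ> tsw a b j"

lemma gpow_in_cyc: "(g ^^ i) x \<in> cyc x"
  unfolding cyc_range by blast

lemma tsw_props:
  assumes ga: "g a \<noteq> a" and gb: "g b \<noteq> b" and bc: "b \<notin> cyc a"
  shows "j \<le> p \<Longrightarrow> (\<forall>i<j. tsw a b j ((g^^i) a) = (g^^i) b) \<and> (\<forall>i<j. tsw a b j ((g^^i) b) = (g^^i) a) \<and>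
     (\<forall>x. x \<notin> (\<lambda>i. (g^^i) a) ` {..<j} \<and> x \<notin> (\<lambda>i. (g^^i) b) ` {..<j} \<longrightarrow> tsw a b j x = x)"
proof (induction j)
  case 0 then show ?case by simp
next
  case (Suc j)
  have dis: "(g ^^ i) a \<noteq> (g ^^ i') b" for i i'
  proof
    assume "(g ^^ i) a = (g ^^ i') b"
    then have "cyc a = cyc b" using cyc_disj[OF gpow_in_cyc[of i a]] gpow_in_cyc[of i' b] by metis
    then show False using bc cyc_self[of b] by blast
  qed
  have ia: "i = i'" if "i < p" "i' < p" "(g ^^ i) a = (g ^^ i') a" for i i'
    using inj_onD[OF nonfixed_inj[OF ga]] that by blast
  have ib: "i = i'" if "i < p" "i' < p" "(g ^^ i) b = (g ^^ i') b" for i i'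
    using inj_onD[OF nonfixed_inj[OF gb]] that by blast
  have jp: "j < p" using Suc.prems by simp
  then have IH: "(\<forall>i<j. tsw a b j ((g^^i) a) = (g^^i) b) \<and> (\<forall>i<j. tsw a b j ((g^^i) b) = (g^^i) a) \<and>
     (\<forall>x. x \<notin> (\<lambda>i. (g^^i) a) ` {..<j} \<and> x \<notin> (\<lambda>i. (g^^i) b) ` {..<j} \<longrightarrow> tsw a b j x = x)"
    using Suc.IH by simp
  define u where "u = (g ^^ j) a"
  define v where "v = (g ^^ j) b"
  have ts: "tsw a b (Suc j) x = transpose u v (tsw a b j x)" for x unfolding u_def v_def by simp
  have Tu: "tsw a b j u = u"
  proof -
    have "u \<notin> (\<lambda>i. (g^^i) a) ` {..<j}"
    proof
      assume "u \<in> (\<lambda>i. (g^^i) a) ` {..<j}"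
      then obtain i where i: "i < j" "u = (g^^i) a" by blast
      then have "i = j" using ia[of i j] jp unfolding u_def by simp
      with i(1) show False by simp
    qed
    moreover have "u \<notin> (\<lambda>i. (g^^i) b) ` {..<j}" using dis unfolding u_def by blast
    ultimately show ?thesis using IH by blast
  qed
  have Tv: "tsw a b j v = v"
  proof -
    have "v \<notin> (\<lambda>i. (g^^i) b) ` {..<j}"
    proof
      assume "v \<in> (\<lambda>i. (g^^i) b) ` {..<j}"
      then obtain i where i: "i < j" "v = (g^^i) b" by blast
      then have "i = j" using ib[of i j] jp unfolding v_def by simp
      with i(1) show False by simp
    qed
    moreover have "v \<notin> (\<lambda>i. (g^^i) a) ` {..<j}"
    proof
      assume "v \<in> (\<lambda>i. (g^^i) a) ` {..<j}"
      then obtain i where "v = (g^^i) a" by blast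
      then show False using dis[of i j] unfolding v_def by simp
    qed
    ultimately show ?thesis using IH by blast
  qed
  have P1: "tsw a b (Suc j) ((g^^i) a) = (g^^i) b" if "i < Suc j" for i
  proof (cases "i = j")
    case True then show ?thesis using ts Tu unfolding u_def v_def by simp
  next
    case False
    then have "i < j" using that by simp
    then have "tsw a b j ((g^^i) a) = (g^^i) b" using IH by blast
    moreover have "(g^^i) b \<noteq> u" using dis[of j i] unfolding u_def by auto
    moreover have "(g^^i) b \<noteq> v" using ib[of i j] \<open>i < j\<close> jp unfolding v_def by auto
    ultimately show ?thesis by (simp add: u_def v_def)
  qed
  have P2: "tsw a b (Suc j) ((g^^i) b) = (g^^i) a" if "i < Suc j" for i
  proof (cases "i = j")
    case True then show ?thesis using ts Tv unfolding u_def v_def by simp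
  next
    case False
    then have "i < j" using that by simp
    then have "tsw a b j ((g^^i) b) = (g^^i) a" using IH by blast
    moreover have "(g^^i) a \<noteq> v" using dis[of i j] unfolding v_def by auto
    moreover have "(g^^i) a \<noteq> u" using ia[of i j] \<open>i < j\<close> jp unfolding u_def by auto
    ultimately show ?thesis by (simp add: u_def v_def)
  qed
  have P3: "tsw a b (Suc j) x = x" if "x \<notin> (\<lambda>i. (g^^i) a) ` {..<Suc j}" "x \<notin> (\<lambda>i. (g^^i) b) ` {..<Suc j}" for x
  proof -
    have "x \<notin> (\<lambda>i. (g^^i) a) ` {..<j}" "x \<notin> (\<lambda>i. (g^^i) b) ` {..<j}" using that by auto
    then have "tsw a b j x = x" using IH by blast
    moreover have "x \<noteq> u" "x \<noteq> v" using that unfolding u_def v_def by auto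
    ultimately show ?thesis by (simp add: u_def v_def)
  qed
  show ?case using P1 P2 P3 by blast
qed

definition sig where "sig a b = tsw a b p"

lemma sig_a:
  assumes "g a \<noteq> a" "g b \<noteq> b" "b \<notin> cyc a"
  shows "sig a b ((g^^i) a) = (g^^i) b"
proof -
  have "sig a b ((g^^(i mod p)) a) = (g^^(i mod p)) b"
    using tsw_props[OF assms, of p] p0 unfolding sig_def by simp
  then show ?thesis using gpow_mod by metis
qed

lemma sig_b:
  assumes "g a \<noteq> a" "g b \<noteq> b" "b \<notin> cyc a"
  shows "sig a b ((g^^i) b) = (g^^i) a"
proof -
  have "sig a b ((g^^(i mod p)) b) = (g^^(i mod p)) a"
    using tsw_props[OF assms, of p] p0 unfolding sig_def by simp
  then show ?thesis using gpow_mod by metis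
qed

lemma sig_other:
  assumes "g a \<noteq> a" "g b \<noteq> b" "b \<notin> cyc a" "x \<notin> cyc a" "x \<notin> cyc b"
  shows "sig a b x = x"
  using tsw_props[OF assms(1-3), of p] assms(4,5) unfolding sig_def cyc_def by simp

lemma tsw_perm: "a \<in> {1..n} \<Longrightarrow> b \<in> {1..n} \<Longrightarrow> tsw a b j permutes {1..n}"
proof (induction j)
  case 0 then show ?case using permutes_id by (simp only: tsw.simps)
next
  case (Suc j)
  have tp: "transpose ((g ^^ j) a) ((g ^^ j) b) permutes {1..n}"
    using Suc.prems inS_gpow by (intro permutes_swap_id) blast+
  have "tsw a b j permutes {1..n}" using Suc by blast
  from permutes_compose[OF this tp] show ?case by (simp only: tsw.simps)
qed

lemma sig_perm: "a \<in> {1..n} \<Longrightarrow> b \<in> {1..n} \<Longrightarrow> sig a b permutes {1..n}"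
  unfolding sig_def by (rule tsw_perm)

lemma tsw_even:
  assumes "a \<in> {1..n}" "b \<in> {1..n}" "b \<notin> cyc a"
  shows "evenperm (tsw a b j) \<longleftrightarrow> even j"
proof (induction j)
  case 0 then show ?case by simp
next
  case (Suc j)
  have ne: "(g ^^ j) a \<noteq> (g ^^ j) b"
  proof
    assume "(g ^^ j) a = (g ^^ j) b"
    then have "cyc a = cyc b" using cyc_disj[OF gpow_in_cyc[of j a]] gpow_in_cyc[of j b] by metis
    then show False using assms(3) cyc_self[of b] by blast
  qed
  have pt: "permutation (tsw a b j)" using tsw_perm[OF assms(1,2)] finS permutation_permutes by blast
  have "evenperm (tsw a b (Suc j)) = (evenperm (transpose ((g ^^ j) a) ((g ^^ j) b)) = evenperm (tsw a b j))"
    using evenperm_comp[OF permutation_swap_id pt] by (simp only: tsw.simps)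
  moreover have "\<not> evenperm (transpose ((g ^^ j) a) ((g ^^ j) b))" using ne by (simp add: evenperm_swap)
  ultimately show ?case using Suc.IH by (simp del: tsw.simps)
qed

lemma sig_odd:
  assumes "a \<in> {1..n}" "b \<in> {1..n}" "b \<notin> cyc a" "odd p"
  shows "\<not> evenperm (sig a b)"
  unfolding sig_def using tsw_even[OF assms(1-3)] assms(4) by simp

lemma sig_comm:
  assumes "g a \<noteq> a" "g b \<noteq> b" "b \<notin> cyc a"
  shows "sig a b \<circ> g = g \<circ> sig a b"
proof
  fix x
  show "(sig a b \<circ> g) x = (g \<circ> sig a b) x"
  proof (cases "x \<in> cyc a")
    case True
    then obtain i where x: "x = (g ^^ i) a" unfolding cyc_def by blast
    have "sig a b (g x) = sig a b ((g ^^ Suc i) a)" using x by simp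
    also have "\<dots> = (g ^^ Suc i) b" by (rule sig_a[OF assms])
    also have "\<dots> = g (sig a b x)" using x sig_a[OF assms, of i] by simp
    finally show ?thesis by simp
  next
    case F1: False
    show ?thesis
    proof (cases "x \<in> cyc b")
      case True
      then obtain i where x: "x = (g ^^ i) b" unfolding cyc_def by blast
      have "sig a b (g x) = sig a b ((g ^^ Suc i) b)" using x by simp
      also have "\<dots> = (g ^^ Suc i) a" by (rule sig_b[OF assms])
      also have "\<dots> = g (sig a b x)" using x sig_b[OF assms, of i] by simp
      finally show ?thesis by simp
    next
      case False
      have "g x \<notin> cyc a" "g x \<notin> cyc b" using F1 False g_notin_cyc by blast+
      then show ?thesis using sig_other[OF assms] F1 False by simp
    qed
  qed
qed

lemma sig_img:
  assumes "g a \<noteq> a" "g b \<noteq> b" "b \<notin> cyc a"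
  shows "sig a b ` cyc a = cyc b"
  unfolding cyc_def image_image using sig_a[OF assms] by simp

end

lemma card_ge2_other:
  assumes "2 \<le> card A" obtains b where "b \<in> A" "b \<noteq> a"
proof -
  have "\<not> A \<subseteq> {a}"
  proof
    assume "A \<subseteq> {a}"
    then have "card A \<le> card {a}" by (intro card_mono) simp_all
    then show False using assms by simp
  qed
  then show ?thesis using that by blast
qed

lemma card2_eq:
  assumes "card A = 2" "a \<in> A" "b \<in> A" "a \<noteq> b" shows "A = {a, b}"
proof -
  have fin: "finite A" using assms(1) card.infinite by force
  have "{a, b} \<subseteq> A" using assms by blast
  moreover have "card {a, b} = card A" using assms by simp
  ultimately show ?thesis using card_subset_eq[OF fin] by metis
qed

context pgn begin

lemma g_img_cyc: "g ` cyc x = cyc x"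
proof
  show "g ` cyc x \<subseteq> cyc x" using g_cyc by blast
  show "cyc x \<subseteq> g ` cyc x"
  proof
    fix y assume y: "y \<in> cyc x"
    have "g ((g ^^ (p - 1)) y) = (g ^^ Suc (p - 1)) y" by simp
    also have "Suc (p - 1) = p" using p0 by simp
    finally have "g ((g ^^ (p - 1)) y) = y" using gp by simp
    moreover have "(g ^^ (p - 1)) y \<in> cyc x" using gpow_cyc[OF y] .
    ultimately show "y \<in> g ` cyc x" by (metis image_eqI)
  qed
qed

lemma Cyc_E: assumes "C \<in> Cyc" obtains a where "a \<in> {1..n}" "g a \<noteq> a" "C = cyc a"
  using assms unfolding Cyc_def by blast

lemma Fx_E: "x \<in> Fx \<Longrightarrow> x \<in> {1..n} \<and> g x = x" unfolding Fx_def by blast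

end

locale uniq = pgn +
  fixes Gam :: "nat set set"
  assumes GamO: "Gam \<in> Om" and Gfix: "set_act g Gam = Gam"
    and uniq: "\<And>Q. Q \<in> Om \<Longrightarrow> set_act g Q = Q \<Longrightarrow> Q = Gam"
begin

sublocale G: upart n k m Gam using upartI GamO k1 by blast

lemma cent:
  assumes "c permutes {1..n}" "c \<circ> g = g \<circ> c" "B \<in> Gam"
  shows "c ` B \<in> Gam"
proof -
  have "set_act c Gam = Gam" using conj_fixed[OF assms(1,2) GamO Gfix] uniq by blast
  moreover have "c ` B \<in> set_act c Gam" unfolding set_act_def using assms(3) by blast
  ultimately show ?thesis by simp
qed

lemma blocks_inv: assumes B: "B \<in> Gam" shows "g ` B = B"
proof (rule ccontr)
  assume ne: "g ` B \<noteq> B"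
  obtain z where z: "z \<in> B" using G.bne[OF B] by blast
  have gz: "g z \<noteq> z" using noninv_nf[OF GamO Gfix B ne z] .
  obtain w where w: "w \<in> B" "w \<noteq> z" using G.other[OF B] by blast
  have wc: "w \<notin> cyc z" using noninv_inj[OF GamO Gfix B ne z w(1)] w(2) by blast
  have zS: "z \<in> {1..n}" using G.bsub[OF B] z by blast
  have RB: "rot z ` B \<in> Gam" by (rule cent[OF rot_perm[OF zS] rot_comm B])
  have "rot z w = w" using wc unfolding rot_def by simp
  then have "w \<in> rot z ` B" using w(1) by (metis image_eqI)
  then have "rot z ` B = B" using G.bdisj[OF RB B _ w(1)] by blast
  moreover have "rot z z = g z" using cyc_self unfolding rot_def by simp
  ultimately have "g z \<in> B" using z by (metis image_eqI)
  moreover have "g z \<in> g ` B" using z by blast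
  ultimately have "g ` B = B" using G.bdisj[OF blk_g[OF Gfix B] B] by blast
  then show False using ne by blast
qed

lemma blk_cyc: "B \<in> Gam \<Longrightarrow> x \<in> B \<Longrightarrow> cyc x \<subseteq> B"
  using inv_cyc blocks_inv by blast

lemma fix_same:
  assumes "x \<in> Fx" "y \<in> Fx" "x \<in> B" "B \<in> Gam" shows "y \<in> B"
proof (rule ccontr)
  assume yB: "y \<notin> B"
  have xS: "x \<in> {1..n}" "g x = x" and yS: "y \<in> {1..n}" "g y = y" using assms Fx_E by blast+
  have tp: "transpose x y permutes {1..n}" using xS yS by (intro permutes_swap_id)
  have TB: "transpose x y ` B \<in> Gam" by (rule cent[OF tp transp_comm[OF xS(2) yS(2)] assms(4)])
  obtain w where w: "w \<in> B" "w \<noteq> x" using G.other[OF assms(4)] by blast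
  have "w \<noteq> y" using w yB by blast
  then have "transpose x y w = w" using w by simp
  then have "w \<in> transpose x y ` B" using w(1) by (metis image_eqI)
  then have "transpose x y ` B = B" using G.bdisj[OF TB assms(4) _ w(1)] by blast
  moreover have "y \<in> transpose x y ` B" using assms(3) by (metis transpose_apply_first image_eqI)
  ultimately show False using yB by simp
qed

lemma swap_blk:
  assumes a: "a \<in> {1..n}" "g a \<noteq> a" and b: "b \<in> {1..n}" "g b \<noteq> b" and ab: "b \<notin> cyc a"
    and B1: "B1 \<in> Gam" "cyc a \<subseteq> B1" and B2: "B2 \<in> Gam" "cyc b \<subseteq> B2" and ne: "B1 \<noteq> B2"
  shows "B1 = cyc a"
proof -
  let ?s = "sig a b"
  have SB: "?s ` B1 \<in> Gam" by (rule cent[OF sig_perm[OF a(1) b(1)] sig_comm[OF a(2) b(2) ab] B1(1)])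
  have "b \<in> ?s ` B1" using sig_img[OF a(2) b(2) ab] cyc_self[of b] B1(2) by blast
  then have SB2: "?s ` B1 = B2" using G.bdisj[OF SB B2(1)] B2(2) cyc_self[of b] by blast
  show ?thesis
  proof (rule ccontr)
    assume "B1 \<noteq> cyc a"
    then obtain x where x: "x \<in> B1" "x \<notin> cyc a" using B1(2) by blast
    have "x \<notin> cyc b"
    proof
      assume "x \<in> cyc b" then have "x \<in> B2" using B2(2) by blast
      then show False using G.bdisj[OF B1(1) B2(1) x(1)] ne by blast
    qed
    then have "?s x = x" using sig_other[OF a(2) b(2) ab x(2)] by blast
    then have "x \<in> B2" using SB2 x(1) by (metis image_eqI)
    then show False using G.bdisj[OF B1(1) B2(1) x(1)] ne by blast
  qed
qed

end

context uniq begin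

lemma transversal:
  assumes aS: "\<And>i. i < p \<Longrightarrow> a i \<in> {1..n} \<and> g (a i) \<noteq> a i \<and> cyc (a i) \<in> Gam"
    and ainj: "\<And>i j. i < p \<Longrightarrow> j < p \<Longrightarrow> i \<noteq> j \<Longrightarrow> a j \<notin> cyc (a i)"
  shows False
proof -
  define grid where "grid i j = (g ^^ j) (a i)" for i j
  have guniq: "i = i' \<and> j = j'" if "i < p" "j < p" "i' < p" "j' < p" "grid i j = grid i' j'" for i j i' j'
  proof -
    have "grid i j \<in> cyc (a i)" "grid i' j' \<in> cyc (a i')" unfolding grid_def by (simp_all add: gpow_in_cyc)
    then have "cyc (a i) = cyc (a i')" using that(5) cyc_disj by metis
    then have ii: "i = i'" using ainj[OF that(1,3)] cyc_self[of "a i'"] by blast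
    then have "(g ^^ j) (a i) = (g ^^ j') (a i)" using that(5) unfolding grid_def by simp
    then have "j = j'" using inj_onD[OF nonfixed_inj] aS[OF that(1)] that(2,4) by blast
    then show ?thesis using ii by simp
  qed
  define U where "U = (\<Union>i<p. cyc (a i))"
  have U_iff: "x \<in> U \<longleftrightarrow> (\<exists>i<p. \<exists>j<p. x = grid i j)" for x
    unfolding U_def cyc_def grid_def by blast
  have US: "U \<subseteq> {1..n}" unfolding U_def using cyc_S aS by blast
  define crd where "crd x = (SOME ij. fst ij < p \<and> snd ij < p \<and> x = grid (fst ij) (snd ij))" for x
  have crd_grid: "crd (grid i j) = (i, j)" if "i < p" "j < p" for i j
  proof -
    have ex: "\<exists>ij. fst ij < p \<and> snd ij < p \<and> grid i j = grid (fst ij) (snd ij)"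
      using that by (intro exI[of _ "(i,j)"]) simp
    have "fst (crd (grid i j)) < p \<and> snd (crd (grid i j)) < p \<and> grid i j = grid (fst (crd (grid i j))) (snd (crd (grid i j)))"
      unfolding crd_def by (rule someI_ex[OF ex])
    then have "i = fst (crd (grid i j)) \<and> j = snd (crd (grid i j))" using guniq that by blast
    then show ?thesis by (metis prod.collapse)
  qed
  define c where "c x = (if x \<in> U then grid (snd (crd x)) (fst (crd x)) else x)" for x
  have c_grid: "c (grid i j) = grid j i" if "i < p" "j < p" for i j
  proof -
    have "grid i j \<in> U" using U_iff that by blast
    then show ?thesis unfolding c_def using crd_grid[OF that] by simp
  qed
  have c_inv: "c (c x) = x" for x
  proof (cases "x \<in> U")
    case True
    then obtain i j where ij: "i < p" "j < p" "x = grid i j" using U_iff by blast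
    then show ?thesis using c_grid by simp
  next
    case False then show ?thesis unfolding c_def by simp
  qed
  have c_perm: "c permutes {1..n}"
    by (rule perm_of_invol[OF c_inv]) (use US in \<open>auto simp: c_def\<close>)
  define col where "col i = (\<lambda>j. grid j i) ` {..<p}" for i
  have c_cyc: "c ` cyc (a i) = col i" if "i < p" for i
  proof -
    have "cyc (a i) = (\<lambda>j. grid i j) ` {..<p}" unfolding cyc_def grid_def by simp
    then have "c ` cyc (a i) = (\<lambda>j. c (grid i j)) ` {..<p}" by (simp add: image_image)
    also have "\<dots> = col i" unfolding col_def using c_grid that by simp
    finally show ?thesis .
  qed
  have g_col: "g ` col i = col (Suc i mod p)" for i
  proof -
    have "g ` col i = (\<lambda>j. (g ^^ Suc i) (a j)) ` {..<p}" unfolding col_def grid_def image_image by simp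
    also have "\<dots> = (\<lambda>j. (g ^^ (Suc i mod p)) (a j)) ` {..<p}" using gpow_mod by metis
    finally show ?thesis unfolding col_def grid_def .
  qed
  have blk_cases: "(\<exists>i<p. B = cyc (a i)) \<or> B \<inter> U = {}" if "B \<in> Gam" for B
  proof (cases "B \<inter> U = {}")
    case False
    then obtain x i where "x \<in> B" "i < p" "x \<in> cyc (a i)" unfolding U_def by blast
    then have "B = cyc (a i)" using G.bdisj[OF that aS[THEN conjunct2, THEN conjunct2]] by blast
    then show ?thesis using \<open>i < p\<close> by blast
  qed simp
  have c_other: "c ` B = B" if "B \<inter> U = {}" for B
  proof -
    have "\<forall>x\<in>B. c x = x" using that unfolding c_def by auto
    then show ?thesis by simp
  qed
  define Gam' where "Gam' = set_act c Gam"
  have G'O: "Gam' \<in> Om" unfolding Gam'_def by (rule set_act_in[OF c_perm GamO])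
  interpret G': upart n k m Gam' using upartI G'O k1 by blast
  have m0: "m \<noteq> 0" using m2 by simp
  have sub: "set_act g Gam' \<subseteq> Gam'"
  proof
    fix X assume "X \<in> set_act g Gam'"
    then obtain B where B: "B \<in> Gam" "X = g ` (c ` B)" unfolding Gam'_def set_act_def by blast
    show "X \<in> Gam'"
    proof (cases "B \<inter> U = {}")
      case True
      then have "X = c ` B" using B blocks_inv[OF B(1)] c_other by simp
      then show ?thesis unfolding Gam'_def set_act_def using B(1) by blast
    next
      case False
      then obtain i where i: "i < p" "B = cyc (a i)" using blk_cases[OF B(1)] by blast
      have "X = col (Suc i mod p)" using B(2) i c_cyc g_col by simp
      also have "\<dots> = c ` cyc (a (Suc i mod p))" using c_cyc p0 by simp
      finally show ?thesis unfolding Gam'_def set_act_def using aS[of "Suc i mod p"] p0 by simp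
    qed
  qed
  have "card (set_act g Gam') = card Gam'"
  proof -
    have "inj_on (\<lambda>B. g ` B) Gam'" by (auto simp: inj_on_def inj_image_eq_iff[OF g_inj])
    then show ?thesis unfolding set_act_def by (simp add: card_image)
  qed
  then have "set_act g Gam' = Gam'" using card_subset_eq[OF G'.finP[OF m0] sub] by blast
  then have GG: "Gam' = Gam" using uniq G'O by blast
  have "cyc (a 0) \<in> Gam" using aS[of 0] p0 by blast
  then have "c ` cyc (a 0) \<in> Gam'" unfolding Gam'_def set_act_def by blast
  then have "col 0 \<in> Gam'" using c_cyc[of 0] p0 by simp
  then have c0: "col 0 \<in> Gam" using GG by simp
  have "grid 0 0 \<in> col 0" unfolding col_def using p0 by blast
  then have "a 0 \<in> col 0" unfolding grid_def by simp
  then have cc: "col 0 = cyc (a 0)" using G.bdisj[OF c0 aS[of 0, THEN conjunct2, THEN conjunct2] _ cyc_self] p0 by blast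
  have "grid 1 0 \<in> col 0" unfolding col_def using p1 by blast
  then have "a 1 \<in> col 0" unfolding grid_def by simp
  then have "a 1 \<in> cyc (a 0)" using cc by simp
  then show False using ainj[of 0 1] p1 by simp
qed

lemma few_cycles:
  assumes "Cyc \<subseteq> Gam" shows "card Cyc < p"
proof (rule ccontr)
  assume "\<not> card Cyc < p"
  then obtain T where T: "T \<subseteq> Cyc" "card T = p" "finite T" by (metis obtain_subset_with_card_n not_less)
  obtain e where e: "bij_betw e {..<p} T" using finite_same_card_bij[of "{..<p}" T] T by auto
  define rep where "rep C = (SOME x. x \<in> {1..n} \<and> g x \<noteq> x \<and> C = cyc x)" for C
  have rep: "rep C \<in> {1..n} \<and> g (rep C) \<noteq> rep C \<and> C = cyc (rep C)" if CC: "C \<in> Cyc" for C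
  proof -
    obtain x where "x \<in> {1..n}" "g x \<noteq> x" "C = cyc x" using Cyc_E[OF CC] by blast
    then have "x \<in> {1..n} \<and> g x \<noteq> x \<and> C = cyc x" by blast
    then show ?thesis unfolding rep_def by (rule someI)
  qed
  define a where "a i = rep (e i)" for i
  have eT: "e i \<in> Cyc" if "i < p" for i using e that T(1) bij_betwE by blast
  show False
  proof (rule transversal[of a])
    fix i assume i: "i < p"
    show "a i \<in> {1..n} \<and> g (a i) \<noteq> a i \<and> cyc (a i) \<in> Gam"
      using rep[OF eT[OF i]] assms eT[OF i] unfolding a_def by auto
  next
    fix i j assume ij: "i < p" "j < p" "i \<noteq> j"
    show "a j \<notin> cyc (a i)"
    proof
      assume "a j \<in> cyc (a i)"
      then have "cyc (a j) = cyc (a i)" by (rule cyc_eq)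
      then have "e j = e i" using rep[OF eT[OF ij(1)]] rep[OF eT[OF ij(2)]] unfolding a_def by simp
      then show False using bij_betw_imp_inj_on[OF e] ij inj_onD by fastforce
    qed
  qed
qed

end

context pgn begin

lemma fix_img: assumes "\<And>x. x \<in> A \<Longrightarrow> g x = x" shows "g ` A = A"
proof -
  have "g ` A = (\<lambda>x. x) ` A" by (rule image_cong) (simp_all add: assms)
  then show ?thesis by simp
qed

lemma Cyc_nf: "C \<in> Cyc \<Longrightarrow> x \<in> C \<Longrightarrow> g x \<noteq> x"
  by (metis Cyc_E nonfixed_cyc)

lemma Cyc_Fx: "C \<in> Cyc \<Longrightarrow> C \<inter> Fx = {}"
  using Cyc_nf unfolding Fx_def by blast

lemma Cyc_img: "C \<in> Cyc \<Longrightarrow> g ` C = C"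
  by (metis Cyc_E g_img_cyc)

lemma Fx_S: "Fx \<subseteq> {1..n}" unfolding Fx_def by blast

lemma Cyc_ne: "C \<in> Cyc \<Longrightarrow> C \<noteq> {}"
  using Cyc_card p0 by fastforce

lemma Cyc_fin: "C \<in> Cyc \<Longrightarrow> finite C"
  using Cyc_S finite_subset by blast

end

context uniq begin

lemma two_blocks:
  assumes m2e: "m = 2" and Gm: "Gam = {Fx, {1..n} - Fx}" and cF: "card Fx = k" and cC: "2 \<le> card Cyc"
  shows False
proof -
  let ?S = "{1..n}"
  have "n = card Fx + p * card Cyc" using card_S by simp
  then have kp: "k = p * card Cyc" using nkm m2e cF by simp
  then have pk: "p \<le> k" using cC by simp
  have "Cyc \<noteq> {}" using cC by auto
  then obtain D where D: "D \<in> Cyc" by blast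
  obtain D' where D': "D' \<in> Cyc" "D' \<noteq> D" using card_ge2_other[OF cC] by blast
  obtain P where P: "P \<subseteq> Fx" "card P = p" "finite P" using obtain_subset_with_card_n[of p Fx] pk cF by metis
  have DS: "D \<subseteq> ?S" "D \<inter> Fx = {}" "card D = p" "finite D" "D \<noteq> {}"
    using Cyc_S[OF D] Cyc_Fx[OF D] Cyc_card[OF D] Cyc_fin[OF D] Cyc_ne[OF D] by auto
  have D'S: "D' \<subseteq> ?S" "D' \<inter> Fx = {}" "D' \<noteq> {}" "D' \<inter> D = {}"
    using Cyc_S[OF D'(1)] Cyc_Fx[OF D'(1)] Cyc_ne[OF D'(1)] Cyc_disjnt D D'
    unfolding pairwise_def disjnt_def by auto
  have Pne: "P \<noteq> {}" using P(2,3) p0 by auto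
  define X where "X = (Fx - P) \<union> D"
  define Y where "Y = ((?S - Fx) - D) \<union> P"
  have FS: "Fx \<subseteq> ?S" by (rule Fx_S)
  have XY: "X \<inter> Y = {}" unfolding X_def Y_def using P(1) DS(2) by blast
  have XYS: "X \<union> Y = ?S" unfolding X_def Y_def using P(1) DS(1) FS by blast
  have Xne: "X \<noteq> {}" unfolding X_def using DS(5) by blast
  have Yne: "Y \<noteq> {}" unfolding Y_def using Pne by blast
  have XneY: "X \<noteq> Y" using XY Xne by blast
  have finF: "finite Fx" by (rule finFx)
  have cX: "card X = k"
  proof -
    have "card (Fx - P) = k - p" using card_Diff_subset[OF P(3) P(1)] P(2) cF by simp
    moreover have "(Fx - P) \<inter> D = {}" using DS(2) by blast
    ultimately have "card X = k - p + p" unfolding X_def using card_Un_disjoint[of "Fx - P" D] finF DS(3,4) by simp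
    then show ?thesis using pk by simp
  qed
  have cY: "card Y = k"
  proof -
    have "card (?S - Fx) = n - k" using card_Diff_subset[OF finF FS] cF by simp
    then have "card (?S - Fx) = k" using nkm m2e by simp
    moreover have "D \<subseteq> ?S - Fx" using DS(1,2) by blast
    ultimately have "card ((?S - Fx) - D) = k - p" using card_Diff_subset[OF DS(4)] DS(3) by simp
    moreover have "((?S - Fx) - D) \<inter> P = {}" using P(1) by blast
    ultimately have "card Y = k - p + p" unfolding Y_def using card_Un_disjoint[of "(?S - Fx) - D" P] P(2,3) by simp
    then show ?thesis using pk by simp
  qed
  define Q where "Q = {X, Y}"
  have QO: "Q \<in> Om"
  proof -
    have "partition_on ?S Q"
    proof (rule partition_onI)
      show "\<Union>Q = ?S" unfolding Q_def using XYS by simp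
      show "{} \<notin> Q" unfolding Q_def using Xne Yne by simp
      fix A B assume "A \<in> Q" "B \<in> Q" "A \<noteq> B"
      then show "disjnt A B" unfolding Q_def disjnt_def using XY by blast
    qed
    moreover have "card Q = m" unfolding Q_def using XneY m2e by simp
    moreover have "\<forall>B\<in>Q. card B = k" unfolding Q_def using cX cY by simp
    ultimately show ?thesis unfolding uniform_partitions_def by blast
  qed
  have gF: "g ` A = A" if "A \<subseteq> Fx" for A by (rule fix_img) (use that Fx_E in blast)
  have gD: "g ` D = D" by (rule Cyc_img[OF D])
  have gS: "g ` ?S = ?S" using perm by (rule permutes_image)
  have gX: "g ` X = X" unfolding X_def image_Un using gF[of "Fx - P"] gD by simp
  have gY: "g ` Y = Y"
  proof -
    have "g ` ((?S - Fx) - D) = (g ` ?S - g ` Fx) - g ` D" by (simp add: image_set_diff[OF g_inj])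
    also have "\<dots> = (?S - Fx) - D" using gS gF[of Fx] gD by simp
    finally show ?thesis unfolding Y_def image_Un using gF[OF P(1)] by simp
  qed
  have "set_act g Q = Q" unfolding Q_def set_act_def using gX gY by simp
  then have "Q = Gam" using uniq QO by blast
  then have "Fx \<in> Q" using Gm by simp
  then have "Fx = X \<or> Fx = Y" unfolding Q_def by simp
  then show False
  proof
    assume "Fx = X" then show False using DS(2,5) unfolding X_def by blast
  next
    assume "Fx = Y"
    moreover have "D' \<subseteq> Y" unfolding Y_def using D'S by blast
    ultimately show False using D'S(2,3) by blast
  qed
qed

lemma another: assumes "B \<in> Gam" obtains B' where "B' \<in> Gam" "B' \<noteq> B"
  using card_ge2_other[of Gam B] G.cardP m2 by metis

lemma A_main:
  "k = p \<and> ((card Fx = p \<and> card Cyc = m - 1 \<and> m \<le> p) \<or> (card Fx = 0 \<and> card Cyc = m \<and> m < p))"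
proof (cases "Fx = {}")
  case True
  have bc: "\<exists>x. x \<in> {1..n} \<and> g x \<noteq> x \<and> B = cyc x" if B: "B \<in> Gam" for B
  proof -
    obtain x where x: "x \<in> B" using G.bne[OF B] by blast
    have xS: "x \<in> {1..n}" using G.bsub[OF B] x by blast
    have gx: "g x \<noteq> x" using True xS unfolding Fx_def by blast
    obtain B' where B': "B' \<in> Gam" "B' \<noteq> B" using another[OF B] by blast
    obtain y where y: "y \<in> B'" using G.bne[OF B'(1)] by blast
    have yS: "y \<in> {1..n}" using G.bsub[OF B'(1)] y by blast
    have gy: "g y \<noteq> y" using True yS unfolding Fx_def by blast
    have yx: "y \<notin> cyc x"
    proof
      assume "y \<in> cyc x" then have "y \<in> B" using blk_cyc[OF B x] by blast
      then show False using G.bdisj[OF B B'(1) _ y] B'(2) by blast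
    qed
    have "B = cyc x" by (rule swap_blk[OF xS gx yS gy yx B blk_cyc[OF B x] B'(1) blk_cyc[OF B'(1) y] B'(2)[symmetric]])
    then show ?thesis using xS gx by blast
  qed
  have "Gam \<noteq> {}" using G.cardP m2 by auto
  then obtain B where B: "B \<in> Gam" by blast
  obtain x where x: "x \<in> {1..n}" "g x \<noteq> x" "B = cyc x" using bc[OF B] by blast
  have kp: "k = p" using G.bcard[OF B] card_cyc[OF x(2)] x(3) by simp
  have "Gam = Cyc"
  proof
    show "Gam \<subseteq> Cyc" using bc cyc_in_Cyc by blast
    show "Cyc \<subseteq> Gam"
    proof
      fix C assume "C \<in> Cyc"
      then obtain a where a: "a \<in> {1..n}" "g a \<noteq> a" "C = cyc a" by (rule Cyc_E)
      obtain B where B: "B \<in> Gam" "a \<in> B" using G.cover[OF a(1)] by blast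
      obtain y where y: "y \<in> {1..n}" "g y \<noteq> y" "B = cyc y" using bc[OF B(1)] by blast
      have "C = B" using cyc_eq[of a y] B(2) y(3) a(3) by simp
      then show "C \<in> Gam" using B(1) by simp
    qed
  qed
  then have "card Cyc = m" "m < p" using G.cardP few_cycles by auto
  moreover have "card Fx = 0" using True by simp
  ultimately show ?thesis using kp by simp
next
  case False
  then obtain x0 where x0: "x0 \<in> Fx" by blast
  have x0S: "x0 \<in> {1..n}" "g x0 = x0" using Fx_E[OF x0] by auto
  obtain B0 where B0: "B0 \<in> Gam" "x0 \<in> B0" using G.cover[OF x0S(1)] by blast
  have FB0: "Fx \<subseteq> B0" using fix_same[OF x0 _ B0(2) B0(1)] by blast
  have nf: "x \<in> {1..n} \<and> g x \<noteq> x" if "B \<in> Gam" "B \<noteq> B0" "x \<in> B" for B x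
  proof -
    have xS: "x \<in> {1..n}" using G.bsub[OF that(1)] that(3) by blast
    moreover have "g x \<noteq> x"
    proof
      assume "g x = x" then have "x \<in> B0" using FB0 xS unfolding Fx_def by blast
      then show False using G.bdisj[OF that(1) B0(1) that(3)] that(2) by blast
    qed
    ultimately show ?thesis by blast
  qed
  obtain B1 where B1: "B1 \<in> Gam" "B1 \<noteq> B0" using another[OF B0(1)] by blast
  obtain y1 where y1: "y1 \<in> B1" using G.bne[OF B1(1)] by blast
  have y1S: "y1 \<in> {1..n}" "g y1 \<noteq> y1" using nf[OF B1 y1] by auto
  have B0F: "B0 = Fx"
  proof
    show "Fx \<subseteq> B0" by (rule FB0)
    show "B0 \<subseteq> Fx"
    proof
      fix z assume z: "z \<in> B0"
      have zS: "z \<in> {1..n}" using G.bsub[OF B0(1)] z by blast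
      have "g z = z"
      proof (rule ccontr)
        assume gz: "g z \<noteq> z"
        have yz: "y1 \<notin> cyc z"
        proof
          assume "y1 \<in> cyc z" then have "y1 \<in> B0" using blk_cyc[OF B0(1) z] by blast
          then show False using G.bdisj[OF B1(1) B0(1) y1] B1(2) by blast
        qed
        have "B0 = cyc z" by (rule swap_blk[OF zS gz y1S(1) y1S(2) yz B0(1) blk_cyc[OF B0(1) z] B1(1) blk_cyc[OF B1(1) y1] B1(2)[symmetric]])
        then have "x0 \<in> cyc z" using B0(2) by simp
        then show False using nonfixed_cyc[OF gz] x0S(2) by blast
      qed
      then show "z \<in> Fx" using zS unfolding Fx_def by blast
    qed
  qed
  have kF: "card Fx = k" using G.bcard[OF B0(1)] B0F by simp
  show ?thesis
  proof (cases "m = 2")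
    case True
    have Gm: "Gam = {B0, B1}" using card2_eq[of Gam B0 B1] G.cardP True B0(1) B1 by metis
    have B1S: "B1 = {1..n} - Fx"
    proof
      show "B1 \<subseteq> {1..n} - Fx" using nf[OF B1] unfolding Fx_def by blast
      show "{1..n} - Fx \<subseteq> B1"
      proof
        fix x assume x: "x \<in> {1..n} - Fx"
        obtain B where B: "B \<in> Gam" "x \<in> B" using G.cover x by blast
        then show "x \<in> B1" using Gm B0F x by auto
      qed
    qed
    have c1: "1 \<le> card Cyc"
    proof -
      have "cyc y1 \<in> Cyc" using cyc_in_Cyc y1S by blast
      then have "Cyc \<noteq> {}" by blast
      then show ?thesis using finCyc by (simp add: Suc_le_eq card_gt_0_iff)
    qed
    have "\<not> 2 \<le> card Cyc" using two_blocks[OF True _ kF] Gm B0F B1S by blast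
    then have cc: "card Cyc = 1" using c1 by simp
    have "n = card Fx + p * card Cyc" using card_S by simp
    then have "k = p" using nkm True kF cc by simp
    then show ?thesis using kF cc True p1 by simp
  next
    case False
    then have m3: "3 \<le> m" using m2 by simp
    have cycB: "\<exists>y. y \<in> {1..n} \<and> g y \<noteq> y \<and> B = cyc y" if B: "B \<in> Gam" "B \<noteq> B0" for B
    proof -
      have "Gam - {B0, B} \<noteq> {}"
      proof
        assume "Gam - {B0, B} = {}"
        then have "Gam \<subseteq> {B0, B}" by blast
        then have "card Gam \<le> card {B0, B}" by (intro card_mono) simp_all
        also have "\<dots> \<le> 2" by (simp add: card_insert_le_m1)
        finally show False using G.cardP m3 by simp
      qed
      then obtain B' where B': "B' \<in> Gam" "B' \<noteq> B0" "B' \<noteq> B" by blast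
      obtain y where y: "y \<in> B" using G.bne[OF B(1)] by blast
      have yS: "y \<in> {1..n}" "g y \<noteq> y" using nf[OF B y] by auto
      obtain z where z: "z \<in> B'" using G.bne[OF B'(1)] by blast
      have zS: "z \<in> {1..n}" "g z \<noteq> z" using nf[OF B'(1,2) z] by auto
      have zy: "z \<notin> cyc y"
      proof
        assume "z \<in> cyc y" then have "z \<in> B" using blk_cyc[OF B(1) y] by blast
        then show False using G.bdisj[OF B(1) B'(1) _ z] B'(3) by blast
      qed
      have "B = cyc y" by (rule swap_blk[OF yS zS zy B(1) blk_cyc[OF B(1) y] B'(1) blk_cyc[OF B'(1) z] B'(3)[symmetric]])
      then show ?thesis using yS by blast
    qed
    obtain y where y: "y \<in> {1..n}" "g y \<noteq> y" "B1 = cyc y" using cycB[OF B1] by blast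
    have kp: "k = p" using G.bcard[OF B1(1)] card_cyc[OF y(2)] y(3) by simp
    have CG: "Cyc \<subseteq> Gam"
    proof
      fix C assume "C \<in> Cyc"
      then obtain a where a: "a \<in> {1..n}" "g a \<noteq> a" "C = cyc a" by (rule Cyc_E)
      obtain B where B: "B \<in> Gam" "a \<in> B" using G.cover[OF a(1)] by blast
      have "B \<noteq> B0" using B(2) a(2) B0F unfolding Fx_def by blast
      then obtain y where y: "y \<in> {1..n}" "g y \<noteq> y" "B = cyc y" using cycB[OF B(1)] by blast
      have "C = B" using cyc_eq[of a y] B(2) y(3) a(3) by simp
      then show "C \<in> Gam" using B(1) by simp
    qed
    have GI: "Gam = insert B0 Cyc"
    proof
      show "insert B0 Cyc \<subseteq> Gam" using CG B0(1) by blast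
      show "Gam \<subseteq> insert B0 Cyc" using cycB cyc_in_Cyc by blast
    qed
    have B0C: "B0 \<notin> Cyc" using Cyc_nf B0(2) x0S(2) by blast
    have "card Gam = card Cyc + 1" using GI B0C finCyc by simp
    then have cC: "card Cyc = m - 1" using G.cardP by simp
    have "m - 1 < p" using few_cycles[OF CG] cC by simp
    then show ?thesis using kp kF cC by simp
  qed
qed

end

context pgn begin

lemma std_unique:
  assumes kp: "k = p" and cF: "card Fx = p" and cC: "card Cyc < p"
  shows "insert Fx Cyc \<in> Om \<and> set_act g (insert Fx Cyc) = insert Fx Cyc"
    and "\<And>Q. Q \<in> Om \<Longrightarrow> set_act g Q = Q \<Longrightarrow> Q = insert Fx Cyc"
proof -
  have Fne: "Fx \<noteq> {}" using cF p0 by auto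
  have FC: "Fx \<notin> Cyc" using Cyc_Fx Fne by blast
  show "insert Fx Cyc \<in> Om \<and> set_act g (insert Fx Cyc) = insert Fx Cyc"
  proof
    have "partition_on {1..n} (insert Fx Cyc)"
    proof (rule partition_onI)
      show "\<Union>(insert Fx Cyc) = {1..n}" using S_split by simp
      show "{} \<notin> insert Fx Cyc" using Fne Cyc_ne by blast
      fix A B assume AB: "A \<in> insert Fx Cyc" "B \<in> insert Fx Cyc" "A \<noteq> B"
      show "disjnt A B"
      proof (cases "A = Fx")
        case True then have "B \<in> Cyc" using AB by simp
        then show ?thesis using Cyc_Fx True unfolding disjnt_def by blast
      next
        case False then have A: "A \<in> Cyc" using AB by simp
        show ?thesis
        proof (cases "B = Fx")
          case True then show ?thesis using Cyc_Fx[OF A] unfolding disjnt_def by blast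
        next
          case False then have "B \<in> Cyc" using AB by simp
          then show ?thesis using Cyc_disjnt A AB(3) unfolding pairwise_def by blast
        qed
      qed
    qed
    moreover have "card (insert Fx Cyc) = m"
    proof -
      have "n = p + p * card Cyc" using card_S cF by simp
      then have "p * m = p * (card Cyc + 1)" using nkm kp by simp
      then have "m = card Cyc + 1" using p0 by (metis mult_cancel_left neq0_conv)
      then show ?thesis using FC finCyc by simp
    qed
    moreover have "\<forall>B\<in>insert Fx Cyc. card B = k" using cF kp Cyc_card by auto
    ultimately show "insert Fx Cyc \<in> Om" unfolding uniform_partitions_def by blast
    have "set_act g (insert Fx Cyc) = insert (g ` Fx) ((\<lambda>B. g ` B) ` Cyc)" unfolding set_act_def by simp
    also have "(\<lambda>B. g ` B) ` Cyc = (\<lambda>B. B) ` Cyc" by (rule image_cong) (simp_all add: Cyc_img)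
    also have "g ` Fx = Fx" by (rule fix_img) (use Fx_E in blast)
    finally show "set_act g (insert Fx Cyc) = insert Fx Cyc" by simp
  qed
  fix Q assume QO: "Q \<in> Om" and Qf: "set_act g Q = Q"
  interpret Q: upart n k m Q using upartI QO k1 by blast
  have inv: "g ` B = B" if B: "B \<in> Q" for B
  proof (rule ccontr)
    assume ne: "g ` B \<noteq> B"
    have "inj_on cyc B"
    proof (rule inj_onI)
      fix z w assume zw: "z \<in> B" "w \<in> B" "cyc z = cyc w"
      then have "w \<in> cyc z" using cyc_self by simp
      then show "z = w" using noninv_inj[OF QO Qf B ne zw(1,2)] by simp
    qed
    moreover have "cyc ` B \<subseteq> Cyc"
    proof
      fix C assume "C \<in> cyc ` B"
      then obtain z where z: "z \<in> B" "C = cyc z" by blast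
      have "z \<in> {1..n}" using Q.bsub[OF B] z by blast
      moreover have "g z \<noteq> z" using noninv_nf[OF QO Qf B ne z(1)] .
      ultimately show "C \<in> Cyc" using z cyc_in_Cyc by simp
    qed
    ultimately have "card B \<le> card Cyc" using card_inj_on_le finCyc by blast
    then show False using Q.bcard[OF B] kp cC by simp
  qed
  have blk: "B = Fx \<or> B \<in> Cyc" if B: "B \<in> Q" for B
  proof (cases "\<exists>x\<in>B. g x \<noteq> x")
    case True
    then obtain x where x: "x \<in> B" "g x \<noteq> x" by blast
    have xS: "x \<in> {1..n}" using Q.bsub[OF B] x by blast
    have sub: "cyc x \<subseteq> B" using inv_cyc[OF inv[OF B] x(1)] .
    have "card (cyc x) = card B" using card_cyc[OF x(2)] Q.bcard[OF B] kp by simp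
    then have "cyc x = B" using card_subset_eq[OF Q.bfin[OF B] sub] by blast
    then show ?thesis using cyc_in_Cyc[OF xS x(2)] by simp
  next
    case False
    then have sub: "B \<subseteq> Fx" using Q.bsub[OF B] unfolding Fx_def by blast
    have "card B = card Fx" using Q.bcard[OF B] kp cF by simp
    then have "B = Fx" using card_subset_eq[OF finFx sub] by blast
    then show ?thesis by simp
  qed
  show "Q = insert Fx Cyc"
  proof
    show "Q \<subseteq> insert Fx Cyc" using blk by blast
    obtain x0 where x0: "x0 \<in> Fx" using Fne by blast
    obtain B where B: "B \<in> Q" "x0 \<in> B" using Q.cover Fx_E[OF x0] by blast
    have "B = Fx" using blk[OF B(1)] Cyc_nf B(2) Fx_E[OF x0] by blast
    then have FQ: "Fx \<in> Q" using B(1) by simp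
    have "Cyc \<subseteq> Q"
    proof
      fix C assume "C \<in> Cyc"
      then obtain a where a: "a \<in> {1..n}" "g a \<noteq> a" "C = cyc a" by (rule Cyc_E)
      obtain B where B: "B \<in> Q" "a \<in> B" using Q.cover[OF a(1)] by blast
      have "B \<noteq> Fx" using B(2) a(2) Fx_E by blast
      then have "B \<in> Cyc" using blk[OF B(1)] by simp
      then obtain b where b: "B = cyc b" by (rule Cyc_E)
      have "C = B" using cyc_eq[of a b] B(2) b a(3) by simp
      then show "C \<in> Q" using B(1) by simp
    qed
    then show "insert Fx Cyc \<subseteq> Q" using FQ by blast
  qed
qed

lemma std_exists_unique:
  assumes "k = p" "card Fx = p" "card Cyc < p"
  shows "\<exists>!Q. Q \<in> Om \<and> set_act g Q = Q"
  using std_unique[OF assms] by blast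

end

definition gc :: "nat \<Rightarrow> nat \<Rightarrow> nat \<Rightarrow> nat" where
  "gc p m x = (if p < x \<and> x \<le> p * m then ((x - 1) div p) * p + (Suc ((x - 1) mod p) mod p) + 1 else x)"

locale conc =
  fixes p m :: nat
  assumes p1: "1 < p" and m2: "2 \<le> m"
begin

lemma gc_qs:
  assumes "1 \<le> q" "q < m" "s < p"
  shows "gc p m (q * p + s + 1) = q * p + (Suc s mod p) + 1"
proof -
  have d: "(q * p + s) div p = q" using assms(3) by simp
  have md: "(q * p + s) mod p = s" using assms(3) by simp
  have "p \<le> q * p" using assms(1) by simp
  then have lo: "p < q * p + s + 1" by linarith
  have "Suc q \<le> m" using assms(2) by simp
  then have "Suc q * p \<le> m * p" by (rule mult_le_mono1)
  then have hi: "q * p + s + 1 \<le> p * m" using assms(3) by (simp add: mult.commute)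
  show ?thesis unfolding gc_def using lo hi d md by simp
qed

lemma gc_pow:
  assumes "1 \<le> q" "q < m" "s < p"
  shows "(gc p m ^^ i) (q * p + s + 1) = q * p + ((s + i) mod p) + 1"
proof (induction i)
  case 0 then show ?case using assms(3) by simp
next
  case (Suc i)
  have "(gc p m ^^ Suc i) (q * p + s + 1) = gc p m (q * p + ((s + i) mod p) + 1)" using Suc by simp
  also have "\<dots> = q * p + (Suc ((s + i) mod p) mod p) + 1"
    using gc_qs[OF assms(1,2)] p1 by simp
  also have "Suc ((s + i) mod p) mod p = (s + Suc i) mod p" by (simp add: mod_Suc_eq)
  finally show ?case .
qed

lemma gc_decomp:
  assumes "p < x" "x \<le> p * m"
  shows "x = ((x - 1) div p) * p + (x - 1) mod p + 1 \<and> 1 \<le> (x - 1) div p \<and> (x - 1) div p < m \<and> (x - 1) mod p < p"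
proof -
  have p0: "0 < p" using p1 by simp
  have "p div p \<le> (x - 1) div p" using assms(1) by (intro div_le_mono) simp
  then have a: "1 \<le> (x - 1) div p" using p0 by simp
  have "x - 1 < m * p" using assms by (simp add: mult.commute)
  then have b: "(x - 1) div p < m" using p0 by (simp add: div_less_iff_less_mult)
  have c: "x = ((x - 1) div p) * p + (x - 1) mod p + 1" using assms(1) by simp
  show ?thesis using a b c p0 by simp
qed

lemma gc_p: "gc p m ^^ p = id"
proof
  fix x
  show "(gc p m ^^ p) x = id x"
  proof (cases "p < x \<and> x \<le> p * m")
    case True
    note d = gc_decomp[OF True[THEN conjunct1] True[THEN conjunct2]]
    have "(gc p m ^^ p) x = (gc p m ^^ p) (((x - 1) div p) * p + (x - 1) mod p + 1)" using d by metis
    also have "\<dots> = ((x - 1) div p) * p + (((x - 1) mod p + p) mod p) + 1"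
      using gc_pow d by blast
    also have "\<dots> = x" using d by simp
    finally show ?thesis by simp
  next
    case False
    then have "gc p m x = x" unfolding gc_def by (simp only: if_False)
    then show ?thesis using funpow_fix[where h="gc p m" and x=x and j=p] by simp
  qed
qed

lemma gc_perm: "gc p m permutes {1..p * m}"
proof -
  have out: "gc p m x = x" if "x \<notin> {1..p * m}" for x
    using that unfolding gc_def by auto
  have inv: "gc p m ((gc p m ^^ (p - 1)) y) = y" for y
  proof -
    have "gc p m ((gc p m ^^ (p - 1)) y) = (gc p m ^^ Suc (p - 1)) y" by simp
    also have "Suc (p - 1) = p" using p1 by simp
    finally show ?thesis using gc_p by simp
  qed
  have inv2: "(gc p m ^^ (p - 1)) (gc p m y) = y" for y
  proof -
    have "(gc p m ^^ (p - 1)) (gc p m y) = (gc p m ^^ Suc (p - 1)) y" by (simp only: funpow_Suc_right o_apply)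
    also have "Suc (p - 1) = p" using p1 by simp
    finally show ?thesis using gc_p by simp
  qed
  show ?thesis unfolding permutes_def
  proof (intro conjI allI impI)
    fix x assume "x \<notin> {1..p * m}" then show "gc p m x = x" by (rule out)
  next
    fix y show "\<exists>!x. gc p m x = y"
    proof
      show "gc p m ((gc p m ^^ (p - 1)) y) = y" by (rule inv)
      fix x assume "gc p m x = y" then show "x = (gc p m ^^ (p - 1)) y" using inv2 by metis
    qed
  qed
qed

lemma gc_fix: assumes "x \<in> {1..p * m}" shows "gc p m x = x \<longleftrightarrow> x \<le> p"
proof (cases "p < x")
  case True
  have r: "p < x \<and> x \<le> p * m" using True assms by simp
  note d = gc_decomp[OF True r[THEN conjunct2]]
  define q where "q = (x - 1) div p"
  define s where "s = (x - 1) mod p"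
  have x: "x = q * p + s + 1" "1 \<le> q" "q < m" "s < p" using d unfolding q_def s_def by auto
  have "gc p m x = q * p + (Suc s mod p) + 1" using gc_qs[OF x(2-4)] x(1) by simp
  moreover have "Suc s mod p \<noteq> s"
  proof (cases "Suc s < p")
    case True then show ?thesis by simp
  next
    case False
    then have "Suc s = p" using x(4) by simp
    then show ?thesis using p1 by auto
  qed
  ultimately have "gc p m x \<noteq> x" using x(1) by simp
  then show ?thesis using True by simp
next
  case False then show ?thesis unfolding gc_def by simp
qed

lemma gc_ne: "gc p m \<noteq> id"
proof
  assume "gc p m = id"
  moreover have "gc p m (1 * p + 0 + 1) = 1 * p + (Suc 0 mod p) + 1"
    using gc_qs[of 1 0] m2 p1 by simp
  ultimately show False using p1 by simp
qed

end

context pg begin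
lemma cycE: assumes "y \<in> cyc x" obtains i where "i < p" "(g ^^ i) x = y"
proof -
  obtain i where "i \<in> {..<p}" "y = (g ^^ i) x" using assms unfolding cyc_def by (rule imageE)
  then show ?thesis using that by simp
qed
lemma gpow_in_cyc0: "(g ^^ i) x \<in> cyc x"
  unfolding cyc_range by blast
end

lemma conj_exists:
  assumes PG: "pg g p S" and PH: "pg h p S"
    and cF: "card (pg.Fx g S) = card (pg.Fx h S)" and cC: "card (pg.Cyc g p S) = card (pg.Cyc h p S)"
  shows "\<exists>c. c permutes S \<and> c \<circ> g = h \<circ> c"
proof -
  interpret G: pg g p S by (rule PG)
  interpret H: pg h p S by (rule PH)
  obtain psi where psi: "bij_betw psi G.Fx H.Fx" using finite_same_card_bij[OF G.finFx H.finFx cF] by blast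
  obtain phi where phi: "bij_betw phi G.Cyc H.Cyc" using finite_same_card_bij[OF G.finCyc H.finCyc cC] by blast
  define rg where "rg C = (SOME a. a \<in> S \<and> g a \<noteq> a \<and> C = G.cyc a)" for C
  define rh where "rh C = (SOME a. a \<in> S \<and> h a \<noteq> a \<and> C = H.cyc a)" for C
  have rg: "rg C \<in> S \<and> g (rg C) \<noteq> rg C \<and> C = G.cyc (rg C)" if CC: "C \<in> G.Cyc" for C
  proof -
    obtain a where "a \<in> S \<and> g a \<noteq> a \<and> C = G.cyc a" using CC unfolding G.Cyc_def by blast
    then show ?thesis unfolding rg_def by (rule someI)
  qed
  have rh: "rh C \<in> S \<and> h (rh C) \<noteq> rh C \<and> C = H.cyc (rh C)" if CC: "C \<in> H.Cyc" for C
  proof -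
    obtain a where "a \<in> S \<and> h a \<noteq> a \<and> C = H.cyc a" using CC unfolding H.Cyc_def by blast
    then show ?thesis unfolding rh_def by (rule someI)
  qed
  define idx where "idx x = (SOME i. i < p \<and> (g ^^ i) (rg (G.cyc x)) = x)" for x
  have nfC: "G.cyc x \<in> G.Cyc" if "x \<in> S" "g x \<noteq> x" for x using G.cyc_in_Cyc that .
  have idx: "idx x < p \<and> (g ^^ idx x) (rg (G.cyc x)) = x" if x: "x \<in> S" "g x \<noteq> x" for x
  proof -
    have "G.cyc x = G.cyc (rg (G.cyc x))" using rg[OF nfC[OF x]] by blast
    then have "x \<in> G.cyc (rg (G.cyc x))" using G.cyc_self by metis
    then obtain i where "i < p" "(g ^^ i) (rg (G.cyc x)) = x" by (rule G.cycE)
    then have "\<exists>i. i < p \<and> (g ^^ i) (rg (G.cyc x)) = x" by blast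
    then show ?thesis unfolding idx_def by (rule someI_ex)
  qed
  have idx_u: "idx x = i" if x: "x \<in> S" "g x \<noteq> x" and i: "i < p" "(g ^^ i) (rg (G.cyc x)) = x" for x i
  proof -
    have "g (rg (G.cyc x)) \<noteq> rg (G.cyc x)" using rg[OF nfC[OF x]] by blast
    then show ?thesis using inj_onD[OF G.nonfixed_inj] idx[OF x] i by (metis lessThan_iff)
  qed
  define c where "c x = (if x \<in> G.Fx then psi x else if x \<in> S then (h ^^ idx x) (rh (phi (G.cyc x))) else x)" for x
  have hC: "phi (G.cyc x) \<in> H.Cyc" if "x \<in> S" "g x \<noteq> x" for x using phi nfC[OF that] bij_betwE by blast
  have cnf: "c x = (h ^^ idx x) (rh (phi (G.cyc x)))" if "x \<in> S" "g x \<noteq> x" for x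
    using that unfolding c_def G.Fx_def by simp
  have cnf_in: "c x \<in> phi (G.cyc x)" if x: "x \<in> S" "g x \<noteq> x" for x
  proof -
    have "c x \<in> H.cyc (rh (phi (G.cyc x)))" using cnf[OF x] H.gpow_in_cyc0 by simp
    then show ?thesis using rh[OF hC[OF x]] by metis
  qed
  have cnf_nf: "h (c x) \<noteq> c x" if x: "x \<in> S" "g x \<noteq> x" for x
  proof -
    let ?b = "rh (phi (G.cyc x))"
    have b: "h ?b \<noteq> ?b" "phi (G.cyc x) = H.cyc ?b" using rh[OF hC[OF x]] by auto
    have "c x \<in> H.cyc ?b" using cnf_in[OF x] b(2) by simp
    then show ?thesis using H.nonfixed_cyc[OF b(1)] by blast
  qed
  have cF_in: "c x \<in> H.Fx" if "x \<in> G.Fx" for x using that psi bij_betwE unfolding c_def by fastforce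
  have comm: "c (g x) = h (c x)" for x
  proof (cases "x \<in> S")
    case False
    then have "g x = x" using G.perm permutes_not_in by metis
    moreover have "h x = x" using False H.perm permutes_not_in by metis
    moreover have "c x = x" using False G.Fx_def unfolding c_def by simp
    ultimately show ?thesis by simp
  next
    case xS: True
    show ?thesis
    proof (cases "g x = x")
      case True
      then have xF: "x \<in> G.Fx" using xS unfolding G.Fx_def by simp
      then have "h (c x) = c x" using cF_in unfolding H.Fx_def by blast
      then show ?thesis using True by simp
    next
      case False
      have gxS: "g x \<in> S" "g (g x) \<noteq> g x" using xS False G.inS_g G.g_inj[THEN injD] by metis+
      have same: "G.cyc (g x) = G.cyc x" using G.cyc_eq G.g_cyc G.cyc_self by metis
      let ?a = "rg (G.cyc x)"
      have ix: "idx x < p" "(g ^^ idx x) ?a = x" using idx[OF xS False] by auto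
      have "(g ^^ (Suc (idx x) mod p)) ?a = (g ^^ Suc (idx x)) ?a" using G.gpow_mod by metis
      also have "\<dots> = g x" using ix by simp
      finally have "idx (g x) = Suc (idx x) mod p" using idx_u[OF gxS, of "Suc (idx x) mod p"] same G.p0 by simp
      then have "c (g x) = (h ^^ (Suc (idx x) mod p)) (rh (phi (G.cyc x)))" using cnf[OF gxS] same by simp
      also have "\<dots> = (h ^^ Suc (idx x)) (rh (phi (G.cyc x)))" using H.gpow_mod by metis
      also have "\<dots> = h (c x)" using cnf[OF xS False] by simp
      finally show ?thesis .
    qed
  qed
  have perm: "c permutes S"
  proof (rule perm_of_inj[OF G.finS])
    show "c ` S \<subseteq> S"
    proof
      fix y assume "y \<in> c ` S"
      then obtain x where x: "x \<in> S" "y = c x" by blast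
      show "y \<in> S"
      proof (cases "g x = x")
        case True then have "x \<in> G.Fx" using x unfolding G.Fx_def by simp
        then show ?thesis using cF_in x(2) unfolding H.Fx_def by blast
      next
        case False then show ?thesis using cnf_in[OF x(1) False] x(2) H.Cyc_S hC[OF x(1) False] by blast
      qed
    qed
    show "inj_on c S"
    proof (rule inj_onI)
      fix x y assume x: "x \<in> S" and y: "y \<in> S" and e: "c x = c y"
      show "x = y"
      proof (cases "g x = x")
        case gx: True
        then have xF: "x \<in> G.Fx" using x unfolding G.Fx_def by simp
        show ?thesis
        proof (cases "g y = y")
          case True
          then have yF: "y \<in> G.Fx" using y unfolding G.Fx_def by simp
          then show ?thesis using e xF psi unfolding c_def bij_betw_def inj_on_def by simp
        next
          case False
          have "h (c x) = c x" using cF_in[OF xF] unfolding H.Fx_def by blast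
          then show ?thesis using cnf_nf[OF y False] e by simp
        qed
      next
        case gx: False
        show ?thesis
        proof (cases "g y = y")
          case True
          then have yF: "y \<in> G.Fx" using y unfolding G.Fx_def by simp
          have "h (c y) = c y" using cF_in[OF yF] unfolding H.Fx_def by blast
          then show ?thesis using cnf_nf[OF x gx] e by simp
        next
          case gy: False
          have "c x \<in> phi (G.cyc x)" "c x \<in> phi (G.cyc y)" using cnf_in[OF x gx] cnf_in[OF y gy] e by auto
          then have "phi (G.cyc x) = phi (G.cyc y)"
            using H.Cyc_disjnt hC[OF x gx] hC[OF y gy] unfolding pairwise_def disjnt_def by blast
          then have cc: "G.cyc x = G.cyc y" using phi nfC[OF x gx] nfC[OF y gy] unfolding bij_betw_def inj_on_def by blast
          have "(h ^^ idx x) (rh (phi (G.cyc x))) = (h ^^ idx y) (rh (phi (G.cyc x)))"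
            using cnf[OF x gx] cnf[OF y gy] e cc by simp
          moreover have "h (rh (phi (G.cyc x))) \<noteq> rh (phi (G.cyc x))" using rh[OF hC[OF x gx]] by blast
          ultimately have "idx x = idx y" using inj_onD[OF H.nonfixed_inj] idx[OF x gx] idx[OF y gy] by (metis lessThan_iff)
          then show ?thesis using idx[OF x gx] idx[OF y gy] cc by metis
        qed
      qed
    qed
    fix x assume "x \<notin> S"
    then show "c x = x" unfolding c_def G.Fx_def by simp
  qed
  have "c \<circ> g = h \<circ> c" using comm by auto
  then show ?thesis using perm by blast
qed

context pgn begin

lemma conj_even:
  assumes PH: "pg h p {1..n}" and cF: "card Fx = card (pg.Fx h {1..n})"
    and cC: "card Cyc = card (pg.Cyc h p {1..n})" and op: "odd p" and two: "2 \<le> card Fx \<or> 2 \<le> card Cyc"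
  shows "\<exists>c. c permutes {1..n} \<and> evenperm c \<and> c \<circ> g = h \<circ> c"
proof -
  obtain c where c: "c permutes {1..n}" "c \<circ> g = h \<circ> c" using conj_exists[OF pg_axioms PH cF cC] by blast
  have pc: "permutation c" using c(1) finS permutation_permutes by blast
  show ?thesis
  proof (cases "evenperm c")
    case True then show ?thesis using c by blast
  next
    case False
    have "\<exists>t. t permutes {1..n} \<and> \<not> evenperm t \<and> t \<circ> g = g \<circ> t"
    proof (cases "2 \<le> card Fx")
      case True
      then have "Fx \<noteq> {}" by auto
      then obtain x where x: "x \<in> Fx" by blast
      obtain y where y: "y \<in> Fx" "y \<noteq> x" using card_ge2_other[OF True] by blast
      have xs: "x \<in> {1..n}" "g x = x" "y \<in> {1..n}" "g y = y" using Fx_E[OF x] Fx_E[OF y(1)] by blast+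
      have "transpose x y permutes {1..n}" using xs by (intro permutes_swap_id)
      moreover have "\<not> evenperm (transpose x y)" using y(2) by (simp add: evenperm_swap)
      moreover have "transpose x y \<circ> g = g \<circ> transpose x y" using transp_comm xs by blast
      ultimately show ?thesis by blast
    next
      case False
      then have C2: "2 \<le> card Cyc" using two by simp
      then have "Cyc \<noteq> {}" by auto
      then obtain C where C: "C \<in> Cyc" by blast
      obtain D where D: "D \<in> Cyc" "D \<noteq> C" using card_ge2_other[OF C2] by blast
      obtain a where a: "a \<in> {1..n}" "g a \<noteq> a" "C = cyc a" using Cyc_E[OF C] by blast
      obtain b where b: "b \<in> {1..n}" "g b \<noteq> b" "D = cyc b" using Cyc_E[OF D(1)] by blast
      have ab: "b \<notin> cyc a" using cyc_eq a(3) b(3) D(2) by blast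
      show ?thesis using sig_perm[OF a(1) b(1)] sig_odd[OF a(1) b(1) ab op] sig_comm[OF a(2) b(2) ab] by blast
    qed
    then obtain t where t: "t permutes {1..n}" "\<not> evenperm t" "t \<circ> g = g \<circ> t" by blast
    have pt: "permutation t" using t(1) finS permutation_permutes by blast
    have "c \<circ> t permutes {1..n}" using permutes_compose[OF t(1) c(1)] .
    moreover have "evenperm (c \<circ> t)" using evenperm_comp[OF pc pt] False t(2) by simp
    moreover have "(c \<circ> t) \<circ> g = h \<circ> (c \<circ> t)"
    proof -
      have "(c \<circ> t) \<circ> g = c \<circ> (t \<circ> g)" by (simp add: comp_assoc)
      also have "\<dots> = (c \<circ> g) \<circ> t" using t(3) by (simp add: comp_assoc)
      also have "\<dots> = h \<circ> (c \<circ> t)" using c(2) by (simp add: comp_assoc)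
      finally show ?thesis .
    qed
    ultimately show ?thesis by blast
  qed
qed

lemma from_ct:
  assumes hp: "h permutes {1..n}" and ct: "cycle_type h {1..n} = cycle_type g {1..n}"
  shows "pg h p {1..n} \<and> card (pg.Fx h {1..n}) = card Fx \<and> card (pg.Cyc h p {1..n}) = card Cyc"
proof -
  let ?S = "{1..n::nat}"
  have fO: "finite {orbit h x | x. x \<in> ?S}"
  proof -
    have "{orbit h x | x. x \<in> ?S} = orbit h ` ?S" by blast
    then show ?thesis by simp
  qed
  have orb: "card (orbit h x) = 1 \<or> card (orbit h x) = p" if x: "x \<in> ?S" for x
  proof -
    have "card (orbit h x) \<in> set_mset (cycle_type h ?S)"
      unfolding cycle_type_def using fO x by auto
    then have "card (orbit h x) \<in> set_mset (replicate_mset (card Fx) 1 + replicate_mset (card Cyc) p)"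
      using ct cycle_type_g by simp
    then show ?thesis by (auto split: if_splits)
  qed
  have ph: "permutation h" using hp finS permutation_permutes by blast
  have hpid: "h ^^ p = id"
  proof
    fix x show "(h ^^ p) x = id x"
    proof (cases "x \<in> ?S")
      case False
      then have "h x = x" using hp permutes_not_in by metis
      then show ?thesis using funpow_fix[where h=h and x=x and j=p] by simp
    next
      case True
      have xo: "x \<in> orbit h x" by (rule permutation_self_in_orbit[OF ph])
      have d1: "(h ^^ funpow_dist1 h x x) x = x" by (rule funpow_dist1_prop[OF xo])
      have "card (orbit h x) = card {0..<funpow_dist1 h x x}"
        unfolding orbit_conv_funpow_dist1[OF xo] by (rule card_image[OF inj_on_funpow_dist1[OF xo]])
      then have cd: "card (orbit h x) = funpow_dist1 h x x" by simp
      show ?thesis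
      proof (cases "card (orbit h x) = 1")
        case True
        then have "h x = x" using d1 cd by simp
        then show ?thesis using funpow_fix[where h=h and x=x and j=p] by simp
      next
        case False
        then have "card (orbit h x) = p" using orb[OF True] by simp
        then show ?thesis using d1 cd by simp
      qed
    qed
  qed
  have PH: "pg h p ?S" unfolding pg_def using hp finS pr hpid by blast
  interpret H: pg h p ?S by (rule PH)
  have eq: "replicate_mset (card H.Fx) 1 + replicate_mset (card H.Cyc) p = replicate_mset (card Fx) 1 + replicate_mset (card Cyc) p"
    using H.cycle_type_g cycle_type_g ct by simp
  have "count (replicate_mset (card H.Fx) 1 + replicate_mset (card H.Cyc) p) 1 = count (replicate_mset (card Fx) 1 + replicate_mset (card Cyc) p) 1"
    using eq by simp
  then have e1: "card H.Fx = card Fx" using p1 by simp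
  have "count (replicate_mset (card H.Fx) 1 + replicate_mset (card H.Cyc) p) p = count (replicate_mset (card Fx) 1 + replicate_mset (card Cyc) p) p"
    using eq by simp
  then have e2: "card H.Cyc = card Cyc" using p1 by simp
  show ?thesis using PH e1 e2 by blast
qed

end

lemma analysis:
  assumes gpm: "g permutes {1..n}" and prp: "prime p" and gpid: "g ^^ p = id" and n: "n = k * m" "1 < k" "2 \<le> m" "4 < n"
    and q: "quasi_semiregular (uniform_partitions n k m) (set_act g)"
  shows "odd p \<and> k = p \<and> (\<forall>G. G \<in> uniform_partitions n k m \<and> set_act g G = G \<longrightarrow> (\<forall>B\<in>G. g ` B = B)) \<and>
    ((card (pg.Fx g {1..n}) = p \<and> card (pg.Cyc g p {1..n}) = m - 1 \<and> m \<le> p) \<or>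
     (card (pg.Fx g {1..n}) = 0 \<and> card (pg.Cyc g p {1..n}) = m \<and> m < p))"
proof -
  interpret pgn g p n k m
    by unfold_locales (use gpm prp gpid n in auto)
  have ex: "\<exists>!P. P \<in> Om \<and> set_act g P = P" using qsr_iff[OF gpm prp gpid] q by blast
  from ex obtain G0 where G0a: "G0 \<in> Om \<and> set_act g G0 = G0"
    and G0b: "\<forall>Q. Q \<in> Om \<and> set_act g Q = Q \<longrightarrow> Q = G0" by (rule ex1E)
  have G0: "G0 \<in> Om" "set_act g G0 = G0" "\<And>Q. Q \<in> Om \<Longrightarrow> set_act g Q = Q \<Longrightarrow> Q = G0"
    using G0a G0b by blast+
  interpret U: uniq g p n k m G0 by unfold_locales (rule G0(1), rule G0(2), rule G0(3))
  have A: "k = p \<and> ((card Fx = p \<and> card Cyc = m - 1 \<and> m \<le> p) \<or> (card Fx = 0 \<and> card Cyc = m \<and> m < p))"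
    by (rule U.A_main)
  have inv: "\<forall>G. G \<in> Om \<and> set_act g G = G \<longrightarrow> (\<forall>B\<in>G. g ` B = B)"
    using U.blocks_inv G0(3) by blast
  have kp: "k = p" using A by blast
  have "p \<noteq> 2"
  proof
    assume p2: "p = 2"
    have "m \<le> 2" using A p2 by auto
    then have "m = 2" using n(3) by simp
    then have "n = 4" using n(1) kp p2 by simp
    then show False using n(4) by simp
  qed
  moreover have "2 \<le> p" using prp by (rule prime_ge_2_nat)
  ultimately have "2 < p" by simp
  then have odd: "odd p" by (rule prime_odd_nat[OF prp])
  show ?thesis using odd A inv by (intro conjI) blast+
qed

theorem proposition6p4:
  fixes n k m :: nat and G :: "(nat \<Rightarrow> nat) set"
  assumes "n > 4" and "k dvd n" and "1 < k" and "2 * k \<le> n" and "n = k * m"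
    and "G \<in> {sym_grp n, alt_grp n}"
  shows "(\<forall>p::nat. (\<exists>g\<in>G. prime p \<and> g ^^ p = id \<and> g \<noteq> id \<and>
              quasi_semiregular (uniform_partitions n k m) (set_act g))
           \<longleftrightarrow> (prime p \<and> odd p \<and> k = p \<and> 2 \<le> m \<and> m \<le> p))
    \<and> (\<forall>g (p::nat) \<Gamma>. g \<in> G \<longrightarrow> prime p \<longrightarrow> g ^^ p = id \<longrightarrow> g \<noteq> id \<longrightarrow>
          quasi_semiregular (uniform_partitions n k m) (set_act g) \<longrightarrow>
          \<Gamma> \<in> uniform_partitions n k m \<longrightarrow> set_act g \<Gamma> = \<Gamma> \<longrightarrow>
          g \<in> alt_grp n \<and> (\<forall>B\<in>\<Gamma>. g ` B = B) \<and>
          (\<forall>h\<in>G. cycle_type h {1..n} = cycle_type g {1..n} \<longrightarrow>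
               (\<exists>c\<in>G. h = c \<circ> g \<circ> inv c)) \<and>
          ((m = p \<and> cycle_type g {1..n} = replicate_mset p 1 + replicate_mset (m - 1) p)
           \<or> (2 \<le> m \<and> m < p \<and>
               (cycle_type g {1..n} = replicate_mset p 1 + replicate_mset (m - 1) p
                \<or> cycle_type g {1..n} = replicate_mset m p))))"
proof -
  have Gperm: "\<And>g. g \<in> G \<Longrightarrow> g permutes {1..n}" using assms(6) unfolding sym_grp_def alt_grp_def by auto
  have Gmem: "\<And>c. c permutes {1..n} \<Longrightarrow> evenperm c \<Longrightarrow> c \<in> G" using assms(6) unfolding sym_grp_def alt_grp_def by auto
  have k0: "0 < k" using assms(3) by simp
  have "k * 2 \<le> k * m" using assms(4,5) by (simp add: mult.commute)
  then have m2: "2 \<le> m" using k0 by simp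
  have evp: "evenperm g" if "g permutes {1..n}" "g ^^ p = id" "odd p" for g p
  proof -
    have "permutation g" using that(1) permutation_permutes by blast
    then have "evenperm (g ^^ p) = (even p \<or> evenperm g)" by (rule evenperm_funpow)
    then show ?thesis using that(2,3) by simp
  qed
  have P1: "\<forall>p::nat. (\<exists>g\<in>G. prime p \<and> g ^^ p = id \<and> g \<noteq> id \<and>
              quasi_semiregular (uniform_partitions n k m) (set_act g))
           \<longleftrightarrow> (prime p \<and> odd p \<and> k = p \<and> 2 \<le> m \<and> m \<le> p)"
  proof (intro allI iffI)
    fix p assume "\<exists>g\<in>G. prime p \<and> g ^^ p = id \<and> g \<noteq> id \<and> quasi_semiregular (uniform_partitions n k m) (set_act g)"
    then obtain g where g: "g \<in> G" "prime p" "g ^^ p = id" "quasi_semiregular (uniform_partitions n k m) (set_act g)"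
      by blast
    have A: "odd p \<and> k = p \<and> (\<forall>G. G \<in> uniform_partitions n k m \<and> set_act g G = G \<longrightarrow> (\<forall>B\<in>G. g ` B = B)) \<and>
      ((card (pg.Fx g {1..n}) = p \<and> card (pg.Cyc g p {1..n}) = m - 1 \<and> m \<le> p) \<or>
       (card (pg.Fx g {1..n}) = 0 \<and> card (pg.Cyc g p {1..n}) = m \<and> m < p))"
      by (rule analysis[OF Gperm[OF g(1)] g(2) g(3) assms(5) assms(3) m2 assms(1) g(4)])
    then have "m \<le> p" by auto
    then show "prime p \<and> odd p \<and> k = p \<and> 2 \<le> m \<and> m \<le> p" using A g(2) m2 by blast
  next
    fix p assume H: "prime p \<and> odd p \<and> k = p \<and> 2 \<le> m \<and> m \<le> p"
    have pr: "prime p" and op: "odd p" and kp: "k = p" and mp: "m \<le> p" using H by auto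
    have p1: "1 < p" using pr prime_gt_1_nat by blast
    interpret C: conc p m by unfold_locales (use p1 m2 in auto)
    have nn: "n = p * m" using assms(5) kp by simp
    let ?g = "gc p m"
    have gperm: "?g permutes {1..n}" using C.gc_perm nn by simp
    have gpid: "?g ^^ p = id" by (rule C.gc_p)
    have gne: "?g \<noteq> id" by (rule C.gc_ne)
    have gev: "evenperm ?g" using evp[OF gperm gpid op] .
    interpret P: pgn ?g p n k m by unfold_locales (use gperm gpid pr assms(3,5) m2 in auto)
    have Fx: "P.Fx = {1..p}"
    proof -
      have "P.Fx = {x \<in> {1..n}. ?g x = x}" unfolding P.Fx_def ..
      also have "\<dots> = {x \<in> {1..n}. x \<le> p}" using C.gc_fix nn by auto
      also have "\<dots> = {1..p}"
      proof -
        have "p * 1 \<le> p * m" by (rule mult_le_mono2) (use m2 in simp)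
        then have "p \<le> n" using nn by simp
        then show ?thesis by auto
      qed
      finally show ?thesis .
    qed
    then have cF: "card P.Fx = p" by simp
    have "n = p + p * card P.Cyc" using P.card_S cF by simp
    then have "p * m = p * (card P.Cyc + 1)" using nn by simp
    moreover have p0: "0 < p" using p1 by simp
    ultimately have "m = card P.Cyc + 1" by (metis mult_cancel_left neq0_conv)
    then have cC: "card P.Cyc < p" using mp by linarith
    have ex: "\<exists>!Q. Q \<in> uniform_partitions n k m \<and> set_act ?g Q = Q" using P.std_exists_unique[OF kp] cF cC by blast
    have q: "quasi_semiregular (uniform_partitions n k m) (set_act ?g)" using qsr_iff[OF gperm pr gpid, THEN iffD2, OF ex] .
    have "?g \<in> G" using Gmem[OF gperm gev] .
    then show "\<exists>g\<in>G. prime p \<and> g ^^ p = id \<and> g \<noteq> id \<and> quasi_semiregular (uniform_partitions n k m) (set_act g)"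
      using pr gpid gne q by blast
  qed
  have P2: "\<forall>g (p::nat) \<Gamma>. g \<in> G \<longrightarrow> prime p \<longrightarrow> g ^^ p = id \<longrightarrow> g \<noteq> id \<longrightarrow>
          quasi_semiregular (uniform_partitions n k m) (set_act g) \<longrightarrow>
          \<Gamma> \<in> uniform_partitions n k m \<longrightarrow> set_act g \<Gamma> = \<Gamma> \<longrightarrow>
          g \<in> alt_grp n \<and> (\<forall>B\<in>\<Gamma>. g ` B = B) \<and>
          (\<forall>h\<in>G. cycle_type h {1..n} = cycle_type g {1..n} \<longrightarrow>
               (\<exists>c\<in>G. h = c \<circ> g \<circ> inv c)) \<and>
          ((m = p \<and> cycle_type g {1..n} = replicate_mset p 1 + replicate_mset (m - 1) p)
           \<or> (2 \<le> m \<and> m < p \<and>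
               (cycle_type g {1..n} = replicate_mset p 1 + replicate_mset (m - 1) p
                \<or> cycle_type g {1..n} = replicate_mset m p)))"
  proof (intro allI impI)
    fix g p \<Gamma>
    assume gG: "g \<in> G" and pr: "prime p" and gpid: "g ^^ p = id" and gne: "g \<noteq> id"
      and q: "quasi_semiregular (uniform_partitions n k m) (set_act g)"
      and GO: "\<Gamma> \<in> uniform_partitions n k m" and Gf: "set_act g \<Gamma> = \<Gamma>"
    have gperm: "g permutes {1..n}" by (rule Gperm[OF gG])
    have A: "odd p \<and> k = p \<and> (\<forall>G. G \<in> uniform_partitions n k m \<and> set_act g G = G \<longrightarrow> (\<forall>B\<in>G. g ` B = B)) \<and>
      ((card (pg.Fx g {1..n}) = p \<and> card (pg.Cyc g p {1..n}) = m - 1 \<and> m \<le> p) \<or>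
       (card (pg.Fx g {1..n}) = 0 \<and> card (pg.Cyc g p {1..n}) = m \<and> m < p))"
      by (rule analysis[OF gperm pr gpid assms(5) assms(3) m2 assms(1) q])
    have op: "odd p" using A by blast
    interpret P: pgn g p n k m by unfold_locales (use gperm gpid pr assms(3,5) m2 in auto)
    have cases: "(card P.Fx = p \<and> card P.Cyc = m - 1 \<and> m \<le> p) \<or> (card P.Fx = 0 \<and> card P.Cyc = m \<and> m < p)"
      using A by blast
    have alt: "g \<in> alt_grp n" unfolding alt_grp_def using gperm evp[OF gperm gpid op] by blast
    have inv: "\<forall>B\<in>\<Gamma>. g ` B = B" using A GO Gf by blast
    have p3: "2 \<le> p" using pr prime_ge_2_nat by blast
    have two: "2 \<le> card P.Fx \<or> 2 \<le> card P.Cyc" using cases p3 m2 by auto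
    have conj: "\<forall>h\<in>G. cycle_type h {1..n} = cycle_type g {1..n} \<longrightarrow> (\<exists>c\<in>G. h = c \<circ> g \<circ> inv c)"
    proof (intro ballI impI)
      fix h assume hG: "h \<in> G" and ct: "cycle_type h {1..n} = cycle_type g {1..n}"
      have fc: "pg h p {1..n} \<and> card (pg.Fx h {1..n}) = card P.Fx \<and> card (pg.Cyc h p {1..n}) = card P.Cyc"
        by (rule P.from_ct[OF Gperm[OF hG] ct])
      obtain c where c: "c permutes {1..n}" "evenperm c" "c \<circ> g = h \<circ> c"
        using P.conj_even[of h] fc op two by metis
      have "c \<circ> g \<circ> inv c = h \<circ> (c \<circ> inv c)" using c(3) by (simp add: comp_assoc)
      also have "c \<circ> inv c = id" using permutes_inv_o(1)[OF c(1)] .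
      finally have "h = c \<circ> g \<circ> inv c" by (metis comp_id)
      then show "\<exists>c\<in>G. h = c \<circ> g \<circ> inv c" using Gmem[OF c(1,2)] by blast
    qed
    have ct: "cycle_type g {1..n} = replicate_mset (card P.Fx) 1 + replicate_mset (card P.Cyc) p"
      by (rule P.cycle_type_g)
    have last: "(m = p \<and> cycle_type g {1..n} = replicate_mset p 1 + replicate_mset (m - 1) p)
           \<or> (2 \<le> m \<and> m < p \<and>
               (cycle_type g {1..n} = replicate_mset p 1 + replicate_mset (m - 1) p
                \<or> cycle_type g {1..n} = replicate_mset m p))"
    proof (cases "card P.Fx = p \<and> card P.Cyc = m - 1 \<and> m \<le> p")
      case True
      then have e: "cycle_type g {1..n} = replicate_mset p 1 + replicate_mset (m - 1) p" using ct by simp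
      show ?thesis
      proof (cases "m = p")
        case True then show ?thesis using e by blast
      next
        case False then show ?thesis using e m2 \<open>card P.Fx = p \<and> card P.Cyc = m - 1 \<and> m \<le> p\<close> by auto
      qed
    next
      case False
      then have c2: "card P.Fx = 0" "card P.Cyc = m" "m < p" using cases by auto
      then have "cycle_type g {1..n} = replicate_mset m p" using ct by simp
      then show ?thesis using c2 m2 by blast
    qed
    show "g \<in> alt_grp n \<and> (\<forall>B\<in>\<Gamma>. g ` B = B) \<and>
          (\<forall>h\<in>G. cycle_type h {1..n} = cycle_type g {1..n} \<longrightarrow>
               (\<exists>c\<in>G. h = c \<circ> g \<circ> inv c)) \<and>
          ((m = p \<and> cycle_type g {1..n} = replicate_mset p 1 + replicate_mset (m - 1) p)
           \<or> (2 \<le> m \<and> m < p \<and>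
               (cycle_type g {1..n} = replicate_mset p 1 + replicate_mset (m - 1) p
                \<or> cycle_type g {1..n} = replicate_mset m p)))"
      using alt inv conj last by blast
  qed
  show ?thesis using P1 P2 by (rule conjI)
qed

end
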